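(* Let $q\ge1$, $k\ge2$ be integers and $\mathcal{A}$ as in the context. For the type-$\mathcal{A}$ random walk on $\mathbb{Z}^k$ let $\overline{R}_{n,k}=\frac1n(X_1X_2+\cdots+X_nX_{n+1})$. Then for every $\varepsilon>0$, $$\mathbb{V}(\overline{R}_{n,k})=O_{\mathcal{A},k,q,\varepsilon}(n^{-1/2+\varepsilon})\quad\text{as }n\to\infty.$$
   Context: $\mathcal{A}=\{\boldsymbol{\alpha}_1,\dots,\boldsymbol{\alpha}_q\}$ is a finite set of vectors $\boldsymbol{\alpha}_t=(\alpha_{t,1},\dots,\alpha_{t,k})$ with $0<\alpha_{t,j}<1$ for all $j$ and $\alpha_{t,1}+\cdots+\alpha_{t,k}=1$. For $\boldsymbol{\alpha}=(\alpha_1,\dots,\alpha_k)$ of this form, a type-$\boldsymbol{\alpha}$ step $\mathbf{w}(\boldsymbol{\alpha})$ is a random vector equal to the $j$-th standard basis vector of $\mathbb{Z}^k$ with probability $\alpha_j$. The type-$\mathcal{A}$ random walk is $\mathbf{p}_0=(0,\dots,0)$, $\mathbf{p}_i=\mathbf{p}_{i-1}+\mathbf{w}(\boldsymbol{\alpha}'_i)$ for $i\ge1$, where at each step a type $\boldsymbol{\alpha}'_i\in\mathcal{A}$ is chosen and the steps are independent. A lattice point $\mathbf{n}=(n_1,\dots,n_k)\in\mathbb{Z}^k$ is visible if there is no other lattice point on the segment joining it to the origin (equivalently $\gcd(n_1,\dots,n_k)=1$). $X_i=1$ if $\mathbf{p}_i$ is visible and $X_i=0$ otherwise. *)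

theory Defs
  imports "HOL-Probability.Probability"
begin

definition admissible_type :: "nat \<Rightarrow> (nat \<Rightarrow> real) \<Rightarrow> bool" where
  "admissible_type k \<alpha> \<longleftrightarrow> (\<forall>j<k. 0 < \<alpha> j \<and> \<alpha> j < 1) \<and> (\<Sum>j<k. \<alpha> j) = 1"

text \<open>A type-alpha step: the index j of the standard basis vector e_j, chosen with probability alpha_j.\<close>
definition step_pmf :: "nat \<Rightarrow> (nat \<Rightarrow> real) \<Rightarrow> nat pmf" where
  "step_pmf k \<alpha> = embed_pmf (\<lambda>j. if j < k then \<alpha> j else 0)"

text \<open>Joint law of the first m independent steps; the i-th step (i \<ge> 1) has type \<sigma> i.
  The outcome is the list [j_1, ..., j_m] of step directions.\<close>
fun steps_pmf :: "nat \<Rightarrow> (nat \<Rightarrow> nat \<Rightarrow> real) \<Rightarrow> nat \<Rightarrow> nat list pmf" where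
  "steps_pmf k \<sigma> 0 = return_pmf []"
| "steps_pmf k \<sigma> (Suc m) =
     bind_pmf (steps_pmf k \<sigma> m) (\<lambda>js. map_pmf (\<lambda>j. js @ [j]) (step_pmf k (\<sigma> (Suc m))))"

text \<open>Position p_i of the walk: p_i = e_{j_1} + ... + e_{j_i}, a point of Z^k (coordinates c < k).\<close>
definition walk_pos :: "nat list \<Rightarrow> nat \<Rightarrow> (nat \<Rightarrow> int)" where
  "walk_pos js i = (\<lambda>c. int (length (filter (\<lambda>j. j = c) (take i js))))"

definition visible :: "nat \<Rightarrow> (nat \<Rightarrow> int) \<Rightarrow> bool" where
  "visible k p \<longleftrightarrow> Gcd (p ` {..<k}) = 1"

definition X_ind :: "nat \<Rightarrow> nat list \<Rightarrow> nat \<Rightarrow> real" where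
  "X_ind k js i = (if visible k (walk_pos js i) then 1 else 0)"

definition R_bar :: "nat \<Rightarrow> nat \<Rightarrow> nat list \<Rightarrow> real" where
  "R_bar k n js = (1 / real n) * (\<Sum>i=1..n. X_ind k js i * X_ind k js (Suc i))"

end

theory Submission
  imports Defs "HOL-Library.Function_Algebras" "HOL-Computational_Algebra.Primes"
begin

definition adm_seq :: "nat \<Rightarrow> (nat \<Rightarrow> nat \<Rightarrow> real) \<Rightarrow> bool" where
  "adm_seq k \<sigma> \<longleftrightarrow> (\<forall>i. admissible_type k (\<sigma> i))"

lemma pmf_step:
  assumes "admissible_type k \<alpha>"
  shows "pmf (step_pmf k \<alpha>) j = (if j < k then \<alpha> j else 0)"
proof -
  have nn: "\<And>j. 0 \<le> (if j < k then \<alpha> j else 0)"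
    using assms by (auto simp: admissible_type_def less_imp_le)
  have "(\<integral>\<^sup>+ x. ennreal (if x < k then \<alpha> x else 0) \<partial>count_space UNIV)
        = (\<integral>\<^sup>+ x. ennreal (if x < k then \<alpha> x else 0) \<partial>count_space {..<k})"
    by (subst nn_integral_count_space_indicator) (auto intro!: nn_integral_cong split: split_indicator)
  also have "\<dots> = (\<Sum>x<k. ennreal (\<alpha> x))"
    by (subst nn_integral_count_space_finite) auto
  also have "\<dots> = ennreal (\<Sum>x<k. \<alpha> x)"
    using assms by (intro sum_ennreal) (auto simp: admissible_type_def less_imp_le)
  also have "\<dots> = 1" using assms by (simp add: admissible_type_def)
  finally show ?thesis unfolding step_pmf_def
    by (subst pmf_embed_pmf) (use nn in auto)
qed

lemma set_step: "admissible_type k \<alpha> \<Longrightarrow> set_pmf (step_pmf k \<alpha>) \<subseteq> {..<k}"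
  by (auto simp: set_pmf_eq pmf_step)

lemma set_steps:
  assumes "adm_seq k \<sigma>"
  shows "set_pmf (steps_pmf k \<sigma> m) \<subseteq> {js. length js = m \<and> set js \<subseteq> {..<k}}"
proof (induction m)
  case 0 then show ?case by simp
next
  case (Suc m)
  have "admissible_type k (\<sigma> (Suc m))" using assms by (simp add: adm_seq_def)
  from set_step[OF this] Suc show ?case by fastforce
qed

lemma finite_lists_k: "finite {js::nat list. length js = m \<and> set js \<subseteq> {..<k}}"
  using finite_lists_length_eq[of "{..<k}" m] by (simp add: conj_commute)

lemma finite_set_steps: "adm_seq k \<sigma> \<Longrightarrow> finite (set_pmf (steps_pmf k \<sigma> m))"
  using set_steps finite_lists_k finite_subset by metis

lemma steps_split:
  "steps_pmf k \<sigma> (a + b) =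
     bind_pmf (steps_pmf k \<sigma> a) (\<lambda>u. map_pmf (\<lambda>v. u @ v) (steps_pmf k (\<lambda>i. \<sigma> (i + a)) b))"
proof (induction b)
  case 0 then show ?case by (simp add: map_pmf_def bind_return_pmf bind_return_pmf')
next
  case (Suc b)
  show ?case
    by (simp add: Suc map_pmf_def bind_assoc_pmf bind_return_pmf add.commute)
qed

lemma exp_bind:
  fixes h :: "'b \<Rightarrow> real"
  assumes "finite (set_pmf p)" "\<And>x. x \<in> set_pmf p \<Longrightarrow> finite (set_pmf (f x))"
  shows "measure_pmf.expectation (bind_pmf p f) h =
         measure_pmf.expectation p (\<lambda>x. measure_pmf.expectation (f x) h)"
  using assms
  by (subst pmf_expectation_bind[of "set_pmf p"]) (auto simp: integral_measure_pmf[of "set_pmf p"] mult.commute)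

lemma exp_map:
  fixes h :: "'b \<Rightarrow> real"
  shows "measure_pmf.expectation (map_pmf g p) h = measure_pmf.expectation p (\<lambda>x. h (g x))"
  by simp

definition evec :: "nat \<Rightarrow> nat \<Rightarrow> int" where "evec j = (\<lambda>c. if c = j then 1 else 0)"

lemma walk_pos_app1: "i \<le> length u \<Longrightarrow> walk_pos (u @ v) i = walk_pos u i"
  by (simp add: walk_pos_def)

lemma walk_pos_app2: "walk_pos (u @ v) (length u + i) = walk_pos u (length u) + walk_pos v i"
  by (simp add: walk_pos_def fun_eq_iff)

lemma walk_pos_snoc: "walk_pos (u @ [j]) (Suc (length u)) = walk_pos u (length u) + evec j"
  by (simp add: walk_pos_def fun_eq_iff evec_def)

lemma walk_pos_Cons1: "walk_pos (j # v) 1 = evec j"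
  by (simp add: walk_pos_def fun_eq_iff evec_def)

lemma walk_pos_sum:
  "set u \<subseteq> {..<k} \<Longrightarrow> (\<Sum>c<k. walk_pos u i c) = int (min i (length u))"
proof (induction u arbitrary: i rule: rev_induct)
  case Nil then show ?case by (simp add: walk_pos_def)
next
  case (snoc x xs)
  show ?case
  proof (cases "i \<le> length xs")
    case True
    then show ?thesis using snoc walk_pos_app1[of i xs "[x]"] by auto
  next
    case False
    then have "take i (xs @ [x]) = xs @ [x]" by simp
    then have "walk_pos (xs @ [x]) i = walk_pos (xs @ [x]) (Suc (length xs))"
      by (simp add: walk_pos_def)
    also have "\<dots> = walk_pos xs (length xs) + evec x" by (rule walk_pos_snoc)
    finally show ?thesis using snoc(1)[of "length xs"] snoc(2) False
      by (auto simp: sum.distrib evec_def)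
  qed
qed

lemma div_step_int:
  fixes x L :: int
  assumes "L > 0"
  shows "(x + 1) div L = x div L + (if L dvd (x + 1) then 1 else 0)"
proof -
  have e1: "x = L * (x div L) + x mod L" by simp
  have m1: "0 \<le> x mod L" "x mod L < L" using assms by auto
  show ?thesis
  proof (cases "L dvd (x + 1)")
    case True
    then obtain c where c: "x + 1 = L * c" by (auto elim: dvdE)
    then have "(x + 1) div L = c" using assms by simp
    moreover have "x div L = c - 1"
    proof -
      have xe: "x = (L - 1) + (c - 1) * L" using c by (simp add: algebra_simps)
      have "(L - 1) div L = 0" using assms by (intro div_pos_pos_trivial) auto
      then show ?thesis using assms by (subst xe, subst div_mult_self1) auto
    qed
    ultimately show ?thesis using True by simp
  next
    case False
    have "x mod L \<noteq> L - 1"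
    proof
      assume "x mod L = L - 1"
      then have "x + 1 = L * (x div L) + L" using e1 by linarith
      then have "x + 1 = L * (x div L + 1)" by (simp add: algebra_simps)
      then show False using False by simp
    qed
    then have "x mod L + 1 < L" using m1 by linarith
    then have "(x + 1) div L = x div L"
      using m1 by (subst div_add1_eq) (simp add: div_pos_pos_trivial)
    then show ?thesis using False by simp
  qed
qed

lemma count_interval:
  fixes L r :: int and a b :: nat
  assumes "L > 0" "a \<le> b"
  shows "int (card {h\<in>{a..<b}. L dvd int h - r}) = (int b - 1 - r) div L - (int a - 1 - r) div L"
  using assms(2)
proof (induction b rule: dec_induct)
  case base then show ?case by simp
next
  case (step b)
  have s: "{h\<in>{a..<Suc b}. L dvd int h - r} =
        (if L dvd int b - r then insert b {h\<in>{a..<b}. L dvd int h - r} else {h\<in>{a..<b}. L dvd int h - r})"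
    using step.hyps by (auto simp: less_Suc_eq)
  have nb: "b \<notin> {h\<in>{a..<b}. L dvd int h - r}" by auto
  have d: "(int (Suc b) - 1 - r) div L = (int b - 1 - r) div L + (if L dvd (int b - r) then 1 else 0)"
    using div_step_int[OF assms(1), of "int b - 1 - r"] by simp
  show ?case using step.IH nb unfolding s d by (cases "L dvd int b - r") simp_all
qed

lemma count_interval_diff:
  fixes L r r' :: int and a b :: nat
  assumes "L > 0"
  shows "\<bar>real (card {h\<in>{a..<b}. L dvd int h - r}) - real (card {h\<in>{a..<b}. L dvd int h - r'})\<bar> \<le> 1"
proof (cases "a \<le> b")
  case False
  then show ?thesis by simp
next
  case True
  define c1 where "c1 = (int b - 1 - r) div L - (int a - 1 - r) div L"
  define c2 where "c2 = (int b - 1 - r') div L - (int a - 1 - r') div L"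
  have h1: "int (card {h\<in>{a..<b}. L dvd int h - r}) = c1" unfolding c1_def by (rule count_interval[OF assms True])
  have h2: "int (card {h\<in>{a..<b}. L dvd int h - r'}) = c2" unfolding c2_def by (rule count_interval[OF assms True])
  have bnd: "L * ((y::int) div L) \<le> y \<and> y < L * (y div L) + L" for y
  proof -
    have "L * (y div L) + y mod L = y" by (rule mult_div_mod_eq)
    moreover have "0 \<le> y mod L" "y mod L < L" using assms by auto
    ultimately show ?thesis by linarith
  qed
  define qb where "qb = (int b - 1 - r) div L"
  define qa where "qa = (int a - 1 - r) div L"
  define qb' where "qb' = (int b - 1 - r') div L"
  define qa' where "qa' = (int a - 1 - r') div L"
  have "L * c1 = L * qb - L * qa" unfolding c1_def qb_def qa_def by (simp add: right_diff_distrib)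
  moreover have "L * c2 = L * qb' - L * qa'" unfolding c2_def qb'_def qa'_def by (simp add: right_diff_distrib)
  moreover note bnd[of "int b - 1 - r", folded qb_def] bnd[of "int a - 1 - r", folded qa_def]
      bnd[of "int b - 1 - r'", folded qb'_def] bnd[of "int a - 1 - r'", folded qa'_def]
  ultimately have "L * c1 < L * c2 + 2 * L" "L * c2 < L * c1 + 2 * L" by simp_all
  then have "L * c1 < L * (c2 + 2)" "L * c2 < L * (c1 + 2)" by (simp_all add: algebra_simps)
  then have "c1 < c2 + 2" "c2 < c1 + 2" using assms by (simp_all add: mult_less_cancel_left)
  then have "\<bar>c1 - c2\<bar> \<le> 1" by linarith
  then have "\<bar>real_of_int c1 - real_of_int c2\<bar> \<le> 1" by linarith
  moreover have "real (card {h\<in>{a..<b}. L dvd int h - r}) = real_of_int c1"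
    using arg_cong[OF h1, of real_of_int] by simp
  moreover have "real (card {h\<in>{a..<b}. L dvd int h - r'}) = real_of_int c2"
    using arg_cong[OF h2, of real_of_int] by simp
  ultimately show ?thesis by simp
qed

lemma binom_convex:
  assumes "h1 \<le> h" "h \<le> h2" "h2 \<le> M" "y \<le> M choose h1" "y \<le> M choose h2"
  shows "y \<le> M choose h"
proof (cases "2 * h \<le> M")
  case True
  then have "M choose h1 \<le> M choose h" using assms by (intro binomial_mono) auto
  then show ?thesis using assms by linarith
next
  case False
  then have "M choose h2 \<le> M choose h" using assms by (intro binomial_antimono) auto
  then show ?thesis using assms by linarith
qed

lemma level_set_interval:
  fixes M y :: nat
  shows "\<exists>a b. {h\<in>{..M}. y \<le> M choose h} = {a..<b}"
proof (cases "{h\<in>{..M}. y \<le> M choose h} = {}")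
  case True then show ?thesis by (intro exI[of _ 0]) auto
next
  case False
  define J where "J = {h\<in>{..M}. y \<le> M choose h}"
  have fin: "finite J" unfolding J_def by auto
  have ne: "J \<noteq> {}" using False J_def by simp
  have "J = {Min J..<Suc (Max J)}"
  proof
    show "J \<subseteq> {Min J..<Suc (Max J)}" using fin by (auto simp: less_Suc_eq_le)
    show "{Min J..<Suc (Max J)} \<subseteq> J"
    proof
      fix h assume h: "h \<in> {Min J..<Suc (Max J)}"
      have "Min J \<in> J" "Max J \<in> J" using fin ne by auto
      then show "h \<in> J" using h binom_convex[of "Min J" h "Max J" M y] unfolding J_def
        by (auto simp: less_Suc_eq_le)
    qed
  qed
  then show ?thesis unfolding J_def by blast
qed

lemma layer_cake_binom:
  fixes M :: nat and S :: "nat set"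
  assumes "S \<subseteq> {..M}"
  shows "(\<Sum>h\<in>S. real (M choose h)) = (\<Sum>y\<in>{1..M choose (M div 2)}. real (card {h\<in>S. y \<le> M choose h}))"
proof -
  have fS: "finite S" using assms finite_subset by blast
  have "(\<Sum>h\<in>S. real (M choose h)) = (\<Sum>h\<in>S. \<Sum>y\<in>{1..M choose (M div 2)}. (if y \<le> M choose h then 1 else 0))"
  proof (intro sum.cong refl)
    fix h assume "h \<in> S"
    have "M choose h \<le> M choose (M div 2)" by (rule binomial_maximum)
    then have "{1..M choose (M div 2)} \<inter> {y. y \<le> M choose h} = {1..M choose h}" by auto
    then show "real (M choose h) = (\<Sum>y\<in>{1..M choose (M div 2)}. (if y \<le> M choose h then 1 else 0))"
      by (simp add: sum.If_cases)
  qed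
  also have "\<dots> = (\<Sum>y\<in>{1..M choose (M div 2)}. \<Sum>h\<in>S. (if y \<le> M choose h then 1 else 0))"
    by (rule sum.swap)
  also have "\<dots> = (\<Sum>y\<in>{1..M choose (M div 2)}. real (card {h\<in>S. y \<le> M choose h}))"
    using fS by (simp add: sum.If_cases Int_def conj_commute)
  finally show ?thesis .
qed

lemma binom_residue_diff:
  fixes M :: nat and L r r' :: int
  assumes "L > 0"
  shows "\<bar>(\<Sum>h\<in>{h\<in>{..M}. L dvd int h - r}. real (M choose h)) -
          (\<Sum>h\<in>{h\<in>{..M}. L dvd int h - r'}. real (M choose h))\<bar> \<le> real (M choose (M div 2))"
proof -
  define Y where "Y = {1..M choose (M div 2)}"
  define J where "J y = {h\<in>{..M}. y \<le> M choose h}" for y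
  have e: "{h\<in>{h\<in>{..M}. L dvd int h - \<rho>}. y \<le> M choose h} = {h\<in>J y. L dvd int h - \<rho>}" for y \<rho>
    unfolding J_def by auto
  have "(\<Sum>h\<in>{h\<in>{..M}. L dvd int h - r}. real (M choose h)) -
          (\<Sum>h\<in>{h\<in>{..M}. L dvd int h - r'}. real (M choose h))
        = (\<Sum>y\<in>Y. real (card {h\<in>J y. L dvd int h - r}) - real (card {h\<in>J y. L dvd int h - r'}))"
  proof -
    have l1: "(\<Sum>h\<in>{h\<in>{..M}. L dvd int h - r}. real (M choose h)) = (\<Sum>y\<in>Y. real (card {h\<in>{h\<in>{..M}. L dvd int h - r}. y \<le> M choose h}))"
      unfolding Y_def by (rule layer_cake_binom) auto
    have l2: "(\<Sum>h\<in>{h\<in>{..M}. L dvd int h - r'}. real (M choose h)) = (\<Sum>y\<in>Y. real (card {h\<in>{h\<in>{..M}. L dvd int h - r'}. y \<le> M choose h}))"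
      unfolding Y_def by (rule layer_cake_binom) auto
    show ?thesis unfolding l1 l2 e by (simp add: sum_subtractf)
  qed
  also have "\<bar>\<dots>\<bar> \<le> (\<Sum>y\<in>Y. \<bar>real (card {h\<in>J y. L dvd int h - r}) - real (card {h\<in>J y. L dvd int h - r'})\<bar>)"
    by (rule sum_abs)
  also have "\<dots> \<le> (\<Sum>y\<in>Y. 1)"
  proof (intro sum_mono)
    fix y
    obtain a b where "J y = {a..<b}" unfolding J_def using level_set_interval by blast
    then show "\<bar>real (card {h\<in>J y. L dvd int h - r}) - real (card {h\<in>J y. L dvd int h - r'})\<bar> \<le> 1"
      using count_interval_diff[OF assms] by simp
  qed
  also have "\<dots> = real (M choose (M div 2))" unfolding Y_def by simp
  finally show ?thesis .
qed

lemma central_rec: "(n+1) * ((2*n+2) choose (n+1)) = 2 * (2*n+1) * ((2*n) choose n)"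
proof -
  define X where "X = Suc (Suc (2*n)) choose Suc n"
  define Y where "Y = Suc (2*n) choose Suc n"
  define Z where "Z = (2*n) choose n"
  have a: "Suc n * X = Suc (Suc (2*n)) * Y"
  proof -
    have "Suc n * X = Suc (Suc (2*n)) * (Suc (2*n) choose n)" unfolding X_def by (rule Suc_times_binomial)
    moreover have "Suc (2*n) choose n = Y"
      unfolding Y_def using binomial_symmetric[of n "Suc (2*n)"] by (simp add: Suc_diff_le del: binomial_Suc_Suc)
    ultimately show ?thesis by simp
  qed
  have b: "Suc n * Y = Suc (2*n) * Z" unfolding Y_def Z_def by (rule Suc_times_binomial)
  have "Suc n * (Suc n * X) = Suc n * (2 * (Suc (2*n) * Z))"
  proof -
    have "Suc n * (Suc n * X) = Suc (Suc (2*n)) * (Suc n * Y)" using a by (simp add: ac_simps)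
    also have "\<dots> = Suc (Suc (2*n)) * (Suc (2*n) * Z)" using b by simp
    also have "\<dots> = Suc n * (2 * (Suc (2*n) * Z))" by (simp add: ac_simps)
    finally show ?thesis .
  qed
  moreover have nz: "Suc n \<noteq> 0" by simp
  ultimately have "Suc n * X = 2 * (Suc (2*n) * Z)" by (simp only: mult_left_cancel[OF nz])
  moreover have "(2*n+2) choose (n+1) = X" unfolding X_def by (simp del: binomial_Suc_Suc)
  ultimately show ?thesis unfolding Z_def by simp
qed

lemma central_binom_sq_even: "((2*n) choose n)^2 * (2*n+1) \<le> 16^n"
proof (induction n)
  case 0 then show ?case by simp
next
  case (Suc n)
  define c where "c = (2*n) choose n"
  define c' where "c' = (2*n+2) choose (n+1)"
  have rec: "(n+1) * c' = 2 * (2*n+1) * c" unfolding c_def c'_def by (rule central_rec)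
  have "(c'^2 * (2*n+3)) * (n+1)^2 = ((n+1) * c')^2 * (2*n+3)" by (simp only: power2_eq_square ac_simps)
  also have "\<dots> = (4 * (2*n+1) * (2*n+3)) * (c^2 * (2*n+1))" unfolding rec by (simp only: power2_eq_square ac_simps)
  also have "\<dots> \<le> (4 * (2*n+1) * (2*n+3)) * 16^n"
    using Suc.IH unfolding c_def by (intro mult_left_mono) auto
  also have "\<dots> \<le> (16 * (n+1)^2) * 16^n"
  proof (intro mult_right_mono)
    show "4 * (2*n+1) * (2*n+3) \<le> 16 * (n+1)^2" by (simp add: power2_eq_square algebra_simps)
  qed simp
  also have "\<dots> = 16^(Suc n) * (n+1)^2" by simp
  finally have "(c'^2 * (2*n+3)) * (n+1)^2 \<le> 16^(Suc n) * (n+1)^2" .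
  then have "c'^2 * (2*n+3) \<le> 16^(Suc n)" by (simp only: mult_le_cancel2) simp
  moreover have "2 * Suc n = 2*n+2" "2 * Suc n + 1 = 2*n+3" "Suc n = n + 1" by simp_all
  ultimately show ?case unfolding c'_def by (simp only:)
qed

lemma central_binom_sq: "(M choose (M div 2))^2 * (M+1) \<le> 4^M"
proof (cases "even M")
  case True
  then obtain n where M: "M = 2*n" by blast
  have "(4::nat)^M = 16^n" unfolding M by (simp add: power_mult)
  then show ?thesis using central_binom_sq_even[of n] M by simp
next
  case False
  then obtain n where M: "M = 2*n+1" using oddE by blast
  have Md: "M div 2 = n" using M by simp
  define c where "c = (2*n) choose n"
  define d where "d = (2*n+1) choose n"
  have rec: "(n+1) * d = (2*n+1) * c"
  proof -
    have "Suc n * (Suc (2*n) choose Suc n) = Suc (2*n) * c" unfolding c_def by (rule Suc_times_binomial)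
    moreover have "Suc (2*n) choose n = Suc (2*n) choose Suc n"
      using binomial_symmetric[of n "Suc (2*n)"] by (simp add: Suc_diff_le del: binomial_Suc_Suc)
    ultimately show ?thesis unfolding d_def by (simp del: binomial_Suc_Suc)
  qed
  have "(d^2 * (2*n+2)) * (n+1) = ((n+1)*d)^2 * 2" by (simp only: power2_eq_square ac_simps) simp
  also have "\<dots> = (2*(2*n+1)) * (c^2 * (2*n+1))" unfolding rec by (simp only: power2_eq_square ac_simps)
  also have "\<dots> \<le> (2*(2*n+1)) * 16^n"
    using central_binom_sq_even[of n] unfolding c_def by (intro mult_left_mono) auto
  also have "\<dots> \<le> (4*(n+1)) * 16^n" by (intro mult_right_mono) auto
  also have "\<dots> = (4 * 16^n) * (n+1)" by (simp add: algebra_simps)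
  finally have "(d^2 * (2*n+2)) * (n+1) \<le> (4 * 16^n) * (n+1)" .
  then have "d^2 * (2*n+2) \<le> 4 * 16^n" by (simp only: mult_le_cancel2)
  moreover have "(4::nat)^M = 4 * 16^n" unfolding M by (simp add: power_mult power_add)
  ultimately show ?thesis unfolding d_def using M Md by (simp del: binomial_Suc_Suc)
qed

lemma central_binom_bound: "real (M choose (M div 2)) / 2^M \<le> 1 / sqrt (real M + 1)"
proof -
  have "real ((M choose (M div 2))^2 * (M+1)) \<le> real (4^M)" using central_binom_sq by (simp only: of_nat_le_iff)
  moreover have "real (4^M) = ((2::real)^M)^2"
  proof -
    have "((2::real)^M)^2 = 2^M * 2^M" by (rule power2_eq_square)
    also have "\<dots> = (2*2)^M" by (rule power_mult_distrib[symmetric])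
    finally show ?thesis by simp
  qed
  ultimately have h: "(real (M choose (M div 2)))^2 * (real M + 1) \<le> (2^M)^2"
    by (simp only: of_nat_mult of_nat_power of_nat_add of_nat_1)
  have pos: "sqrt (real M + 1) > 0" by simp
  have "real (M choose (M div 2)) * sqrt (real M + 1) \<le> 2^M"
  proof (rule power2_le_imp_le)
    show "(real (M choose (M div 2)) * sqrt (real M + 1))^2 \<le> (2^M)^2"
      using h by (simp add: power_mult_distrib)
  qed simp
  then show ?thesis using pos by (simp add: field_simps)
qed

lemma prob_binom_half:
  fixes S :: "nat set"
  shows "measure_pmf.prob (binomial_pmf M (1/2)) S = (\<Sum>h\<in>{h\<in>{..M}. h \<in> S}. real (M choose h)) / 2^M"
proof -
  have "measure_pmf.prob (binomial_pmf M (1/2)) S = measure_pmf.prob (binomial_pmf M (1/2)) (S \<inter> set_pmf (binomial_pmf M (1/2)))"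
    by (rule measure_Int_set_pmf[symmetric])
  also have "S \<inter> set_pmf (binomial_pmf M (1/2)) = {h\<in>{..M}. h \<in> S}" by auto
  also have "measure_pmf.prob (binomial_pmf M (1/2)) {h\<in>{..M}. h \<in> S} = (\<Sum>h\<in>{h\<in>{..M}. h \<in> S}. pmf (binomial_pmf M (1/2)) h)"
    by (rule measure_measure_pmf_finite) auto
  also have "\<dots> = (\<Sum>h\<in>{h\<in>{..M}. h \<in> S}. real (M choose h) / 2^M)"
  proof (intro sum.cong refl)
    fix h assume "h \<in> {h\<in>{..M}. h \<in> S}"
    then have "h \<le> M" by simp
    then have "(1/2::real)^h * (1 - 1/2)^(M - h) = (1/2)^M"
      by (simp add: power_add[symmetric])
    then show "pmf (binomial_pmf M (1/2)) h = real (M choose h) / 2^M"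
      by (simp add: power_divide mult.assoc)
  qed
  also have "\<dots> = (\<Sum>h\<in>{h\<in>{..M}. h \<in> S}. real (M choose h)) / 2^M"
    by (simp add: sum_divide_distrib)
  finally show ?thesis .
qed

lemma binom_prob_residue:
  fixes L r r' :: int
  assumes "L > 0"
  shows "\<bar>measure_pmf.prob (binomial_pmf M (1/2)) {h. L dvd int h - r} -
          measure_pmf.prob (binomial_pmf M (1/2)) {h. L dvd int h - r'}\<bar> \<le> 1 / sqrt (real M + 1)"
proof -
  have "\<bar>measure_pmf.prob (binomial_pmf M (1/2)) {h. L dvd int h - r} -
          measure_pmf.prob (binomial_pmf M (1/2)) {h. L dvd int h - r'}\<bar>
      = \<bar>(\<Sum>h\<in>{h\<in>{..M}. L dvd int h - r}. real (M choose h)) -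
          (\<Sum>h\<in>{h\<in>{..M}. L dvd int h - r'}. real (M choose h))\<bar> / 2^M"
    unfolding prob_binom_half by (simp add: diff_divide_distrib[symmetric])
  also have "\<dots> \<le> real (M choose (M div 2)) / 2^M"
    by (intro divide_right_mono binom_residue_diff assms) simp
  also have "\<dots> \<le> 1 / sqrt (real M + 1)" by (rule central_binom_bound)
  finally show ?thesis .
qed

lemma exp_inv_binomial:
  fixes \<beta> :: real
  assumes "0 < \<beta>" "\<beta> \<le> 1"
  shows "measure_pmf.expectation (binomial_pmf m \<beta>) (\<lambda>M. 1 / (real M + 1)) \<le> 1 / (\<beta> * (real m + 1))"
proof -
  have "measure_pmf.expectation (binomial_pmf m \<beta>) (\<lambda>M. 1 / (real M + 1))
      = (\<Sum>j\<le>m. real (m choose j) * \<beta>^j * (1-\<beta>)^(m-j) * (1 / (real j + 1)))"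
    using assms by (subst expectation_binomial_pmf') auto
  also have "\<dots> = (\<Sum>j\<le>m. real (Suc m choose Suc j) * \<beta>^j * (1-\<beta>)^(m-j)) / (real m + 1)"
  proof -
    have key: "real (m choose j) * x * (1 / (real j + 1)) = real (Suc m choose Suc j) * x / (real m + 1)" for j x
    proof -
      have "real (Suc j * (Suc m choose Suc j)) = real (Suc m * (m choose j))"
        by (simp only: Suc_times_binomial)
      then have "(real j + 1) * real (Suc m choose Suc j) = (real m + 1) * real (m choose j)"
        by (simp del: binomial_Suc_Suc add: algebra_simps)
      then show ?thesis by (simp add: field_simps del: binomial_Suc_Suc)
    qed
    have "(\<Sum>j\<le>m. real (m choose j) * \<beta>^j * (1-\<beta>)^(m-j) * (1 / (real j + 1)))
        = (\<Sum>j\<le>m. real (Suc m choose Suc j) * (\<beta>^j * (1-\<beta>)^(m-j)) / (real m + 1))"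
    proof (intro sum.cong refl)
      fix j
      show "real (m choose j) * \<beta>^j * (1-\<beta>)^(m-j) * (1 / (real j + 1)) = real (Suc m choose Suc j) * (\<beta>^j * (1-\<beta>)^(m-j)) / (real m + 1)"
        using key[of j "\<beta>^j * (1-\<beta>)^(m-j)"] by (simp only: mult.assoc)
    qed
    also have "\<dots> = (\<Sum>j\<le>m. real (Suc m choose Suc j) * \<beta>^j * (1-\<beta>)^(m-j)) / (real m + 1)"
      by (simp only: sum_divide_distrib mult.assoc)
    finally show ?thesis .
  qed
  also have "\<dots> \<le> 1 / (\<beta> * (real m + 1))"
  proof -
    have "\<beta> * (\<Sum>j\<le>m. real (Suc m choose Suc j) * \<beta>^j * (1-\<beta>)^(m-j))
        = (\<Sum>j\<le>m. real (Suc m choose Suc j) * \<beta>^(Suc j) * (1-\<beta>)^(Suc m - Suc j))"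
      by (simp add: sum_distrib_left algebra_simps del: binomial_Suc_Suc)
    also have "\<dots> \<le> (\<Sum>i\<le>Suc m. real (Suc m choose i) * \<beta>^i * (1-\<beta>)^(Suc m - i))"
      using assms by (subst sum.atMost_Suc_shift) (simp del: binomial_Suc_Suc)
    also have "\<dots> = (\<beta> + (1 - \<beta>))^(Suc m)" by (subst binomial_ring) simp
    also have "\<dots> = 1" by simp
    finally have "\<beta> * (\<Sum>j\<le>m. real (Suc m choose Suc j) * \<beta>^j * (1-\<beta>)^(m-j)) \<le> 1" .
    then have "(\<Sum>j\<le>m. real (Suc m choose Suc j) * \<beta>^j * (1-\<beta>)^(m-j)) \<le> 1 / \<beta>"
      using assms by (simp add: pos_le_divide_eq mult.commute del: binomial_Suc_Suc)
    then have "(\<Sum>j\<le>m. real (Suc m choose Suc j) * \<beta>^j * (1-\<beta>)^(m-j)) / (real m + 1) \<le> (1 / \<beta>) / (real m + 1)"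
      by (rule divide_right_mono) simp
    then show ?thesis by simp
  qed
  finally show ?thesis .
qed

lemma amgm_inv_sqrt:
  fixes x s :: real
  assumes "x > 0" "s > 0"
  shows "1 / sqrt x \<le> (s / x + 1 / s) / 2"
proof -
  have "0 \<le> (sqrt s / sqrt x - 1 / sqrt s)^2" by simp
  also have "\<dots> = s / x - 2 / sqrt x + 1 / s"
    using assms by (simp add: power2_eq_square field_simps real_sqrt_mult[symmetric])
  finally show ?thesis by simp
qed

lemma exp_inv_sqrt_binomial:
  fixes \<beta> :: real
  assumes "0 < \<beta>" "\<beta> \<le> 1"
  shows "measure_pmf.expectation (binomial_pmf m \<beta>) (\<lambda>M. 1 / sqrt (real M + 1)) \<le> 1 / sqrt (\<beta> * (real m + 1))"
proof -
  define \<mu> where "\<mu> = 1 / (\<beta> * (real m + 1))"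
  have \<mu>pos: "\<mu> > 0" unfolding \<mu>_def using assms by simp
  define s where "s = 1 / sqrt \<mu>"
  have spos: "s > 0" unfolding s_def using \<mu>pos by simp
  have "measure_pmf.expectation (binomial_pmf m \<beta>) (\<lambda>M. 1 / sqrt (real M + 1))
      \<le> measure_pmf.expectation (binomial_pmf m \<beta>) (\<lambda>M. (s * (1 / (real M + 1)) + 1 / s) / 2)"
    using assms amgm_inv_sqrt[OF _ spos] by (intro integral_mono) auto
  also have "\<dots> = (s * measure_pmf.expectation (binomial_pmf m \<beta>) (\<lambda>M. 1 / (real M + 1)) + 1 / s) / 2"
  proof -
    have i: "integrable (binomial_pmf m \<beta>) f" for f :: "nat \<Rightarrow> real" using assms by auto
    show ?thesis
      by (simp only: integral_divide_zero Bochner_Integration.integral_add[OF i i] integral_mult_right_zero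
          measure_pmf.prob_space lebesgue_integral_const) simp
  qed
  also have "\<dots> \<le> (s * \<mu> + 1 / s) / 2"
    unfolding \<mu>_def using exp_inv_binomial[OF assms, of m] spos
    by (intro divide_right_mono add_right_mono mult_left_mono) auto
  also have "\<dots> = sqrt \<mu>" unfolding s_def using \<mu>pos
    by (simp add: field_simps)
  also have "\<dots> = 1 / sqrt (\<beta> * (real m + 1))" unfolding \<mu>_def by (simp add: real_sqrt_divide)
  finally show ?thesis .
qed

definition dirv :: "nat \<Rightarrow> nat \<Rightarrow> int" where "dirv l = (\<lambda>c. evec l c - evec 0 c)"
definition mv :: "(nat \<Rightarrow> int) \<Rightarrow> int \<Rightarrow> nat \<Rightarrow> (nat \<Rightarrow> int)" where
  "mv Q z l = (\<lambda>c. Q c + z * dirv l c)"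

definition res_pmf :: "nat \<Rightarrow> nat \<Rightarrow> real \<Rightarrow> (nat \<Rightarrow> real) \<Rightarrow> nat pmf" where
  "res_pmf k l \<beta> \<alpha> = embed_pmf (\<lambda>j. if j < k then (\<alpha> j - (if j = 0 \<or> j = l then \<beta>/2 else 0)) / (1 - \<beta>) else 0)"

definition coin_pmf :: "nat \<Rightarrow> nat pmf" where
  "coin_pmf l = bind_pmf (bernoulli_pmf (1/2)) (\<lambda>b. return_pmf (if b then l else 0))"

definition mixcond :: "nat \<Rightarrow> nat \<Rightarrow> real \<Rightarrow> (nat \<Rightarrow> real) \<Rightarrow> bool" where
  "mixcond k l \<beta> \<alpha> \<longleftrightarrow> admissible_type k \<alpha> \<and> 0 < l \<and> l < k \<and> 0 < \<beta> \<and> \<beta> < 1 \<and> \<beta> \<le> \<alpha> 0 \<and> \<beta> \<le> \<alpha> l"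

lemma pmf_res:
  assumes "mixcond k l \<beta> \<alpha>"
  shows "pmf (res_pmf k l \<beta> \<alpha>) j = (if j < k then (\<alpha> j - (if j = 0 \<or> j = l then \<beta>/2 else 0)) / (1 - \<beta>) else 0)"
proof -
  note a = assms[unfolded mixcond_def admissible_type_def]
  define f where "f j = (if j < k then (\<alpha> j - (if j = 0 \<or> j = l then \<beta>/2 else 0)) / (1 - \<beta>) else 0)" for j
  have nn: "0 \<le> f j" for j
  proof (cases "j < k")
    case True
    then have "0 < \<alpha> j" using a by auto
    moreover have "j = 0 \<or> j = l \<Longrightarrow> \<beta>/2 \<le> \<alpha> j" using a by auto
    ultimately show ?thesis using True a unfolding f_def by (auto intro!: divide_nonneg_pos)
  qed (simp add: f_def)
  have cnt: "(\<Sum>x<k. (if x = 0 \<or> x = l then \<beta>/2 else 0)) = \<beta>"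
  proof -
    have "{x\<in>{..<k}. x = 0 \<or> x = l} = {0, l}" using a by auto
    then have "(\<Sum>x<k. (if x = 0 \<or> x = l then \<beta>/2 else 0)) = (\<Sum>x\<in>{0,l}. \<beta>/2)"
      by (subst sum.If_cases) (simp_all add: Int_def)
    also have "\<dots> = \<beta>" using a by simp
    finally show ?thesis .
  qed
  have "(\<Sum>x<k. f x) = (\<Sum>x<k. (\<alpha> x - (if x = 0 \<or> x = l then \<beta>/2 else 0)) / (1 - \<beta>))"
    unfolding f_def by simp
  also have "\<dots> = ((\<Sum>x<k. \<alpha> x) - (\<Sum>x<k. (if x = 0 \<or> x = l then \<beta>/2 else 0))) / (1 - \<beta>)"
    by (simp add: sum_divide_distrib[symmetric] sum_subtractf)
  also have "\<dots> = 1" using a cnt by simp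
  finally have s1: "(\<Sum>x<k. f x) = 1" .
  have "(\<integral>\<^sup>+ x. ennreal (f x) \<partial>count_space UNIV) = (\<integral>\<^sup>+ x. ennreal (f x) \<partial>count_space {..<k})"
    by (subst nn_integral_count_space_indicator) (auto intro!: nn_integral_cong simp: f_def split: split_indicator)
  also have "\<dots> = (\<Sum>x<k. ennreal (f x))"
    by (subst nn_integral_count_space_finite) auto
  also have "\<dots> = ennreal (\<Sum>x<k. f x)" using nn by (intro sum_ennreal) auto
  also have "\<dots> = 1" using s1 by simp
  finally show ?thesis unfolding res_pmf_def f_def[symmetric]
    by (subst pmf_embed_pmf) (use nn in auto)
qed

lemma set_res: "mixcond k l \<beta> \<alpha> \<Longrightarrow> set_pmf (res_pmf k l \<beta> \<alpha>) \<subseteq> {..<k}"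
  by (auto simp: set_pmf_eq pmf_res)

lemma pmf_coin: "pmf (coin_pmf l) j = (if j = l then 1/2 else 0) + (if j = 0 then 1/2 else 0)"
  unfolding coin_pmf_def by (simp add: pmf_bind pmf_return indicator_def)

lemma mix_step:
  assumes "mixcond k l \<beta> \<alpha>"
  shows "step_pmf k \<alpha> = bind_pmf (bernoulli_pmf \<beta>) (\<lambda>c. if c then coin_pmf l else res_pmf k l \<beta> \<alpha>)"
proof (rule pmf_eqI)
  fix j
  note a = assms[unfolded mixcond_def]
  have "pmf (bind_pmf (bernoulli_pmf \<beta>) (\<lambda>c. if c then coin_pmf l else res_pmf k l \<beta> \<alpha>)) j
      = \<beta> * pmf (coin_pmf l) j + (1 - \<beta>) * pmf (res_pmf k l \<beta> \<alpha>) j"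
    using a by (simp add: pmf_bind)
  also have "\<dots> = (if j < k then \<alpha> j else 0)"
    using a by (auto simp: pmf_coin pmf_res[OF assms] field_simps)
  finally show "pmf (step_pmf k \<alpha>) j = pmf (bind_pmf (bernoulli_pmf \<beta>) (\<lambda>c. if c then coin_pmf l else res_pmf k l \<beta> \<alpha>)) j"
    using a by (simp add: pmf_step)
qed

fun nu :: "nat \<Rightarrow> nat \<Rightarrow> real \<Rightarrow> (nat \<Rightarrow> nat \<Rightarrow> real) \<Rightarrow> nat \<Rightarrow> ((nat \<Rightarrow> int) \<times> nat) pmf" where
  "nu k l \<beta> \<tau> 0 = return_pmf (0, 0)"
| "nu k l \<beta> \<tau> (Suc m) = bind_pmf (nu k l \<beta> \<tau> m) (\<lambda>(Q, M). bind_pmf (bernoulli_pmf \<beta>)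
      (\<lambda>c. if c then return_pmf (Q + evec 0, Suc M) else map_pmf (\<lambda>j. (Q + evec j, M)) (res_pmf k l \<beta> (\<tau> (Suc m)))))"

definition walkW :: "nat \<Rightarrow> (nat \<Rightarrow> nat \<Rightarrow> real) \<Rightarrow> nat \<Rightarrow> (nat \<Rightarrow> int) pmf" where
  "walkW k \<tau> m = map_pmf (\<lambda>js. walk_pos js m) (steps_pmf k \<tau> m)"

lemma walkW_Suc:
  assumes "adm_seq k \<tau>"
  shows "walkW k \<tau> (Suc m) = bind_pmf (walkW k \<tau> m) (\<lambda>p. map_pmf (\<lambda>j. p + evec j) (step_pmf k (\<tau> (Suc m))))"
proof -
  have "walkW k \<tau> (Suc m) = bind_pmf (steps_pmf k \<tau> m)
          (\<lambda>js. map_pmf (\<lambda>js'. walk_pos js' (Suc m)) (map_pmf (\<lambda>j. js @ [j]) (step_pmf k (\<tau> (Suc m)))))"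
    unfolding walkW_def by (simp add: map_bind_pmf)
  also have "\<dots> = bind_pmf (steps_pmf k \<tau> m) (\<lambda>js. map_pmf (\<lambda>j. walk_pos js m + evec j) (step_pmf k (\<tau> (Suc m))))"
  proof (intro bind_pmf_cong refl)
    fix js assume "js \<in> set_pmf (steps_pmf k \<tau> m)"
    then have "length js = m" using set_steps[OF assms] by auto
    then have w: "\<And>j. walk_pos (js @ [j]) (Suc m) = walk_pos js m + evec j" using walk_pos_snoc[of js] by simp
    show "map_pmf (\<lambda>js'. walk_pos js' (Suc m)) (map_pmf (\<lambda>j. js @ [j]) (step_pmf k (\<tau> (Suc m))))
             = map_pmf (\<lambda>j. walk_pos js m + evec j) (step_pmf k (\<tau> (Suc m)))"
      by (simp add: pmf.map_comp o_def w)
  qed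
  also have "\<dots> = bind_pmf (walkW k \<tau> m) (\<lambda>p. map_pmf (\<lambda>j. p + evec j) (step_pmf k (\<tau> (Suc m))))"
    unfolding walkW_def by (simp add: bind_map_pmf)
  finally show ?thesis .
qed

lemma mv_ev0: "mv Q (int h) l + evec (if b then l else 0) = mv (Q + evec 0) (int ((if b then 1 else 0) + h)) l"
  by (auto simp: mv_def dirv_def fun_eq_iff algebra_simps evec_def)

lemma mv_evj: "mv Q z l + evec j = mv (Q + evec j) z l"
  by (auto simp: mv_def fun_eq_iff)

lemma inner_mix:
  assumes "mixcond k l \<beta> \<alpha>"
  shows "bind_pmf (binomial_pmf M (1/2)) (\<lambda>h. map_pmf (\<lambda>j. mv Q (int h) l + evec j) (step_pmf k \<alpha>))
       = bind_pmf (bernoulli_pmf \<beta>) (\<lambda>c. if c then map_pmf (\<lambda>h. mv (Q + evec 0) (int h) l) (binomial_pmf (Suc M) (1/2))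
            else bind_pmf (res_pmf k l \<beta> \<alpha>) (\<lambda>j. map_pmf (\<lambda>h. mv (Q + evec j) (int h) l) (binomial_pmf M (1/2))))"
proof -
  have "bind_pmf (binomial_pmf M (1/2)) (\<lambda>h. map_pmf (\<lambda>j. mv Q (int h) l + evec j) (step_pmf k \<alpha>))
      = bind_pmf (binomial_pmf M (1/2)) (\<lambda>h. bind_pmf (bernoulli_pmf \<beta>) (\<lambda>c.
           map_pmf (\<lambda>j. mv Q (int h) l + evec j) (if c then coin_pmf l else res_pmf k l \<beta> \<alpha>)))"
    by (simp add: mix_step[OF assms] map_bind_pmf)
  also have "\<dots> = bind_pmf (bernoulli_pmf \<beta>) (\<lambda>c. bind_pmf (binomial_pmf M (1/2)) (\<lambda>h.
           map_pmf (\<lambda>j. mv Q (int h) l + evec j) (if c then coin_pmf l else res_pmf k l \<beta> \<alpha>)))"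
    by (rule bind_commute_pmf)
  also have "\<dots> = bind_pmf (bernoulli_pmf \<beta>) (\<lambda>c. if c then map_pmf (\<lambda>h. mv (Q + evec 0) (int h) l) (binomial_pmf (Suc M) (1/2))
            else bind_pmf (res_pmf k l \<beta> \<alpha>) (\<lambda>j. map_pmf (\<lambda>h. mv (Q + evec j) (int h) l) (binomial_pmf M (1/2))))"
  proof (intro bind_pmf_cong refl)
    fix c :: bool
    show "bind_pmf (binomial_pmf M (1/2)) (\<lambda>h. map_pmf (\<lambda>j. mv Q (int h) l + evec j) (if c then coin_pmf l else res_pmf k l \<beta> \<alpha>))
        = (if c then map_pmf (\<lambda>h. mv (Q + evec 0) (int h) l) (binomial_pmf (Suc M) (1/2))
            else bind_pmf (res_pmf k l \<beta> \<alpha>) (\<lambda>j. map_pmf (\<lambda>h. mv (Q + evec j) (int h) l) (binomial_pmf M (1/2))))"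
    proof (cases c)
      case True
      have "bind_pmf (binomial_pmf M (1/2)) (\<lambda>h. map_pmf (\<lambda>j. mv Q (int h) l + evec j) (coin_pmf l))
          = bind_pmf (binomial_pmf M (1/2)) (\<lambda>h. bind_pmf (bernoulli_pmf (1/2)) (\<lambda>b. return_pmf (mv Q (int h) l + evec (if b then l else 0))))"
        unfolding coin_pmf_def by (simp add: map_bind_pmf)
      also have "\<dots> = bind_pmf (bernoulli_pmf (1/2)) (\<lambda>b. bind_pmf (binomial_pmf M (1/2)) (\<lambda>h. return_pmf (mv Q (int h) l + evec (if b then l else 0))))"
        by (rule bind_commute_pmf)
      also have "\<dots> = bind_pmf (bernoulli_pmf (1/2)) (\<lambda>b. bind_pmf (binomial_pmf M (1/2)) (\<lambda>h. return_pmf (mv (Q + evec 0) (int ((if b then 1 else 0) + h)) l)))"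
        by (simp only: mv_ev0)
      also have "\<dots> = map_pmf (\<lambda>h. mv (Q + evec 0) (int h) l) (binomial_pmf (Suc M) (1/2))"
        by (subst binomial_pmf_Suc) (simp_all add: map_bind_pmf)
      finally show ?thesis using True by simp
    next
      case False
      have "bind_pmf (binomial_pmf M (1/2)) (\<lambda>h. map_pmf (\<lambda>j. mv Q (int h) l + evec j) (res_pmf k l \<beta> \<alpha>))
          = bind_pmf (binomial_pmf M (1/2)) (\<lambda>h. bind_pmf (res_pmf k l \<beta> \<alpha>) (\<lambda>j. return_pmf (mv Q (int h) l + evec j)))"
        by (simp add: map_pmf_def)
      also have "\<dots> = bind_pmf (res_pmf k l \<beta> \<alpha>) (\<lambda>j. bind_pmf (binomial_pmf M (1/2)) (\<lambda>h. return_pmf (mv Q (int h) l + evec j)))"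
        by (rule bind_commute_pmf)
      also have "\<dots> = bind_pmf (res_pmf k l \<beta> \<alpha>) (\<lambda>j. map_pmf (\<lambda>h. mv (Q + evec j) (int h) l) (binomial_pmf M (1/2)))"
        by (simp add: map_pmf_def mv_evj)
      finally show ?thesis using False by simp
    qed
  qed
  finally show ?thesis .
qed

lemma finite_set_nu:
  assumes "\<forall>i. mixcond k l \<beta> (\<tau> i)"
  shows "finite (set_pmf (nu k l \<beta> \<tau> m))"
proof (induction m)
  case 0 then show ?case by simp
next
  case (Suc m)
  have fr: "finite (set_pmf (res_pmf k l \<beta> (\<tau> (Suc m))))"
    using set_res[of k l \<beta> "\<tau> (Suc m)"] assms finite_subset by blast
  have "set_pmf (nu k l \<beta> \<tau> (Suc m)) \<subseteq>
        (\<Union>x\<in>set_pmf (nu k l \<beta> \<tau> m). {(fst x + evec 0, Suc (snd x))} \<union> (\<lambda>j. (fst x + evec j, snd x)) ` set_pmf (res_pmf k l \<beta> (\<tau> (Suc m))))"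
    by (auto simp: split_beta split: if_splits)
  moreover have "finite (\<Union>x\<in>set_pmf (nu k l \<beta> \<tau> m). {(fst x + evec 0, Suc (snd x))} \<union> (\<lambda>j. (fst x + evec j, snd x)) ` set_pmf (res_pmf k l \<beta> (\<tau> (Suc m))))"
    using Suc.IH fr by auto
  ultimately show ?case using finite_subset by blast
qed

lemma nu_marginal:
  assumes "\<forall>i. mixcond k l \<beta> (\<tau> i)"
  shows "map_pmf snd (nu k l \<beta> \<tau> m) = binomial_pmf m \<beta>"
proof (induction m)
  case 0
  have b: "\<beta> \<in> {0..1}" using assms by (auto simp: mixcond_def)
  show ?case by (simp add: binomial_pmf_0[OF b])
next
  case (Suc m)
  have b: "\<beta> \<in> {0..1}" using assms by (auto simp: mixcond_def)
  have "map_pmf snd (nu k l \<beta> \<tau> (Suc m)) =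
        bind_pmf (nu k l \<beta> \<tau> m) (\<lambda>x. bind_pmf (bernoulli_pmf \<beta>) (\<lambda>c. return_pmf ((if c then 1 else 0) + snd x)))"
    by (auto simp: map_bind_pmf split_beta pmf.map_comp o_def intro!: bind_pmf_cong)
  also have "\<dots> = bind_pmf (map_pmf snd (nu k l \<beta> \<tau> m)) (\<lambda>M. bind_pmf (bernoulli_pmf \<beta>) (\<lambda>c. return_pmf ((if c then 1 else 0) + M)))"
    by (simp add: bind_map_pmf)
  also have "\<dots> = binomial_pmf (Suc m) \<beta>"
    unfolding Suc.IH using b by (subst binomial_pmf_Suc[OF b]) (rule bind_commute_pmf)
  finally show ?case .
qed

lemma walk_rep:
  assumes "adm_seq k \<tau>" "\<forall>i. mixcond k l \<beta> (\<tau> i)"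
  shows "walkW k \<tau> m = bind_pmf (nu k l \<beta> \<tau> m) (\<lambda>x. map_pmf (\<lambda>h. mv (fst x) (int h) l) (binomial_pmf (snd x) (1/2)))"
proof (induction m)
  case 0
  have "walk_pos [] 0 = 0" by (simp add: walk_pos_def fun_eq_iff)
  moreover have "mv 0 0 l = 0" by (simp add: mv_def fun_eq_iff)
  moreover have "binomial_pmf 0 (1/2) = return_pmf 0" by (rule binomial_pmf_0) simp
  ultimately show ?case by (simp add: walkW_def bind_return_pmf)
next
  case (Suc m)
  let ?B = "\<lambda>M. binomial_pmf M (1/2)"
  let ?R = "res_pmf k l \<beta> (\<tau> (Suc m))"
  have "walkW k \<tau> (Suc m) = bind_pmf (nu k l \<beta> \<tau> m) (\<lambda>x. bind_pmf (?B (snd x))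
           (\<lambda>h. map_pmf (\<lambda>j. mv (fst x) (int h) l + evec j) (step_pmf k (\<tau> (Suc m)))))"
    by (simp add: walkW_Suc[OF assms(1)] Suc.IH bind_assoc_pmf bind_map_pmf)
  also have "\<dots> = bind_pmf (nu k l \<beta> \<tau> m) (\<lambda>x. bind_pmf (bernoulli_pmf \<beta>) (\<lambda>c. if c then map_pmf (\<lambda>h. mv (fst x + evec 0) (int h) l) (?B (Suc (snd x)))
            else bind_pmf ?R (\<lambda>j. map_pmf (\<lambda>h. mv (fst x + evec j) (int h) l) (?B (snd x)))))"
    using assms(2) by (intro bind_pmf_cong refl inner_mix) auto
  also have "\<dots> = bind_pmf (nu k l \<beta> \<tau> (Suc m)) (\<lambda>x. map_pmf (\<lambda>h. mv (fst x) (int h) l) (?B (snd x)))"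
  proof -
    have "bind_pmf (nu k l \<beta> \<tau> (Suc m)) (\<lambda>x. map_pmf (\<lambda>h. mv (fst x) (int h) l) (?B (snd x)))
        = bind_pmf (nu k l \<beta> \<tau> m) (\<lambda>x. bind_pmf (bernoulli_pmf \<beta>) (\<lambda>c.
             bind_pmf (if c then return_pmf (fst x + evec 0, Suc (snd x)) else map_pmf (\<lambda>j. (fst x + evec j, snd x)) ?R)
               (\<lambda>y. map_pmf (\<lambda>h. mv (fst y) (int h) l) (?B (snd y)))))"
      by (simp add: bind_assoc_pmf split_beta)
    also have "\<dots> = bind_pmf (nu k l \<beta> \<tau> m) (\<lambda>x. bind_pmf (bernoulli_pmf \<beta>) (\<lambda>c. if c then map_pmf (\<lambda>h. mv (fst x + evec 0) (int h) l) (?B (Suc (snd x)))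
            else bind_pmf ?R (\<lambda>j. map_pmf (\<lambda>h. mv (fst x + evec j) (int h) l) (?B (snd x)))))"
      by (intro bind_pmf_cong refl) (auto simp: bind_return_pmf bind_map_pmf)
    finally show ?thesis by simp
  qed
  finally show ?case .
qed

lemma mv_mv: "mv (mv Q a l) b l = mv Q (a + b) l"
  by (simp add: mv_def fun_eq_iff algebra_simps)

lemma sec_bound:
  fixes L t :: int
  assumes L: "L > 0"
    and sec: "\<And>Q z1 z2. mv Q z1 l \<in> E \<Longrightarrow> mv Q z2 l \<in> E \<Longrightarrow> L dvd z1 - z2"
    and per: "\<And>Q z w. mv Q z l \<in> E \<Longrightarrow> mv Q (z + L * w) l \<in> E"
  shows "\<bar>measure_pmf.prob (binomial_pmf M (1/2)) {h. mv Q (int h + t) l \<in> E} -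
          measure_pmf.prob (binomial_pmf M (1/2)) {h. mv Q (int h) l \<in> E}\<bar> \<le> 1 / sqrt (real M + 1)"
proof (cases "\<exists>z1. mv Q z1 l \<in> E")
  case True
  then obtain z1 where z1: "mv Q z1 l \<in> E" by blast
  have char: "mv Q z l \<in> E \<longleftrightarrow> L dvd z - z1" for z
  proof
    assume "mv Q z l \<in> E" then show "L dvd z - z1" using sec z1 by blast
  next
    assume "L dvd z - z1"
    then obtain w where "z - z1 = L * w" by (auto elim: dvdE)
    then have "z = z1 + L * w" by simp
    then show "mv Q z l \<in> E" using per[OF z1] by simp
  qed
  have e1: "{h. mv Q (int h + t) l \<in> E} = {h. L dvd int h - (z1 - t)}"
    using char by (auto simp: algebra_simps)
  have e2: "{h. mv Q (int h) l \<in> E} = {h. L dvd int h - z1}"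
    using char by auto
  show ?thesis unfolding e1 e2 by (rule binom_prob_residue[OF L])
next
  case False
  then show ?thesis by simp
qed

lemma prob_walk_rep:
  assumes "adm_seq k \<tau>" "\<forall>i. mixcond k l \<beta> (\<tau> i)"
  shows "measure_pmf.prob (walkW k \<tau> m) S =
         measure_pmf.expectation (nu k l \<beta> \<tau> m) (\<lambda>x. measure_pmf.prob (binomial_pmf (snd x) (1/2)) {h. mv (fst x) (int h) l \<in> S})"
proof -
  have "measure_pmf.prob (walkW k \<tau> m) S = measure_pmf.expectation (walkW k \<tau> m) (indicator S)"
    by simp
  also have "\<dots> = measure_pmf.expectation (nu k l \<beta> \<tau> m)
      (\<lambda>x. measure_pmf.expectation (map_pmf (\<lambda>h. mv (fst x) (int h) l) (binomial_pmf (snd x) (1/2))) (indicator S))"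
    unfolding walk_rep[OF assms] by (rule exp_bind) (use finite_set_nu[OF assms(2)] in auto)
  also have "\<dots> = measure_pmf.expectation (nu k l \<beta> \<tau> m) (\<lambda>x. measure_pmf.prob (binomial_pmf (snd x) (1/2)) {h. mv (fst x) (int h) l \<in> S})"
    by (intro Bochner_Integration.integral_cong refl) (simp add: vimage_def)
  finally show ?thesis .
qed

lemma core:
  fixes L t :: int
  assumes adm: "adm_seq k \<tau>" and mix: "\<forall>i. mixcond k l \<beta> (\<tau> i)" and L: "L > 0"
    and sec: "\<And>Q z1 z2. mv Q z1 l \<in> E \<Longrightarrow> mv Q z2 l \<in> E \<Longrightarrow> L dvd z1 - z2"
    and per: "\<And>Q z w. mv Q z l \<in> E \<Longrightarrow> mv Q (z + L * w) l \<in> E"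
  shows "\<bar>measure_pmf.prob (walkW k \<tau> m) {p. mv p t l \<in> E} - measure_pmf.prob (walkW k \<tau> m) E\<bar>
         \<le> 1 / sqrt (\<beta> * (real m + 1))"
proof -
  let ?\<nu> = "nu k l \<beta> \<tau> m"
  have b: "0 < \<beta>" "\<beta> \<le> 1" using mix by (auto simp: mixcond_def)
  have fin: "finite (set_pmf ?\<nu>)" by (rule finite_set_nu[OF mix])
  define g where "g x = measure_pmf.prob (binomial_pmf (snd x) (1/2)) {h. mv (fst x) (int h + t) l \<in> E} -
          measure_pmf.prob (binomial_pmf (snd x) (1/2)) {h. mv (fst x) (int h) l \<in> E}" for x
  have "measure_pmf.prob (walkW k \<tau> m) {p. mv p t l \<in> E} - measure_pmf.prob (walkW k \<tau> m) E
      = measure_pmf.expectation ?\<nu> (\<lambda>x. measure_pmf.prob (binomial_pmf (snd x) (1/2)) {h. mv (fst x) (int h + t) l \<in> E}) -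
        measure_pmf.expectation ?\<nu> (\<lambda>x. measure_pmf.prob (binomial_pmf (snd x) (1/2)) {h. mv (fst x) (int h) l \<in> E})"
    unfolding prob_walk_rep[OF adm mix] by (simp add: mv_mv)
  also have "\<dots> = measure_pmf.expectation ?\<nu> g"
    unfolding g_def using fin by (subst Bochner_Integration.integral_diff) (auto intro: integrable_measure_pmf_finite)
  finally have eq: "measure_pmf.prob (walkW k \<tau> m) {p. mv p t l \<in> E} - measure_pmf.prob (walkW k \<tau> m) E = measure_pmf.expectation ?\<nu> g" .
  have "\<bar>measure_pmf.expectation ?\<nu> g\<bar> \<le> measure_pmf.expectation ?\<nu> (\<lambda>x. \<bar>g x\<bar>)"
    by (rule integral_abs_bound)
  also have "\<dots> \<le> measure_pmf.expectation ?\<nu> (\<lambda>x. 1 / sqrt (real (snd x) + 1))"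
    using fin by (intro integral_mono) (auto intro: integrable_measure_pmf_finite simp: g_def sec_bound[OF L sec per])
  also have "\<dots> = measure_pmf.expectation (map_pmf snd ?\<nu>) (\<lambda>M. 1 / sqrt (real M + 1))" by simp
  also have "\<dots> = measure_pmf.expectation (binomial_pmf m \<beta>) (\<lambda>M. 1 / sqrt (real M + 1))"
    by (simp only: nu_marginal[OF mix])
  also have "\<dots> \<le> 1 / sqrt (\<beta> * (real m + 1))" by (rule exp_inv_sqrt_binomial[OF b])
  finally show ?thesis using eq by simp
qed

definition Ecop :: "nat \<Rightarrow> int \<Rightarrow> int \<Rightarrow> (nat \<Rightarrow> int) \<Rightarrow> (nat \<Rightarrow> int) \<Rightarrow> (nat \<Rightarrow> int) set" where
  "Ecop k d e a b = {y. (\<forall>c<k. d dvd a c + y c) \<and> (\<forall>c<k. e dvd b c + y c)}"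

lemma Ecop_shift: "{p. mv p t l \<in> Ecop k d e a b} = Ecop k d e (mv a t l) (mv b t l)"
  by (auto simp: Ecop_def mv_def algebra_simps)

lemma dirv_l: "0 < l \<Longrightarrow> dirv l l = 1"
  by (simp add: dirv_def evec_def)

lemma dirv_cases: "dirv l c = 0 \<or> dirv l c = 1 \<or> dirv l c = -1"
  by (auto simp: dirv_def evec_def)

lemma Ecop_sec:
  assumes "coprime d e" "0 < l" "l < k"
    and "mv Q z1 l \<in> Ecop k d e a b" "mv Q z2 l \<in> Ecop k d e a b"
  shows "d * e dvd z1 - z2"
proof (rule divides_mult[OF _ _ assms(1)])
  have "d dvd a l + (Q l + z1)" "d dvd a l + (Q l + z2)"
    using assms by (auto simp: Ecop_def mv_def dirv_l)
  then have "d dvd (a l + (Q l + z1)) - (a l + (Q l + z2))" by (rule dvd_diff)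
  then show "d dvd z1 - z2" by simp
  have "e dvd b l + (Q l + z1)" "e dvd b l + (Q l + z2)"
    using assms by (auto simp: Ecop_def mv_def dirv_l)
  then have "e dvd (b l + (Q l + z1)) - (b l + (Q l + z2))" by (rule dvd_diff)
  then show "e dvd z1 - z2" by simp
qed

lemma Ecop_per:
  assumes "mv Q z l \<in> Ecop k d e a b"
  shows "mv Q (z + d * e * w) l \<in> Ecop k d e a b"
proof -
  have eq: "x + (Q c + (z + d * e * w) * dirv l c) = (x + (Q c + z * dirv l c)) + d * e * w * dirv l c" for x c
    by (simp add: algebra_simps)
  show ?thesis using assms unfolding Ecop_def mv_def
    by (auto simp: eq intro!: dvd_add)
qed

lemma core_Ecop:
  fixes d e t :: int
  assumes adm: "adm_seq k \<tau>" and mix: "\<forall>i. mixcond k l \<beta> (\<tau> i)"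
    and de: "d > 0" "e > 0" "coprime d e"
  shows "\<bar>measure_pmf.prob (walkW k \<tau> m) (Ecop k d e (mv a t l) (mv b t l)) - measure_pmf.prob (walkW k \<tau> m) (Ecop k d e a b)\<bar>
         \<le> 1 / sqrt (\<beta> * (real m + 1))"
proof -
  have l: "0 < l" "l < k" using mix by (auto simp: mixcond_def)
  show ?thesis
    unfolding Ecop_shift[symmetric]
    by (rule core[OF adm mix, where L = "d * e"]) (use de l in \<open>auto intro: Ecop_sec Ecop_per\<close>)
qed

definition Dsh :: "(nat \<Rightarrow> int) \<Rightarrow> nat \<Rightarrow> nat \<Rightarrow> int" where
  "Dsh \<delta> J = (\<lambda>c. \<Sum>l\<in>{1..J}. \<delta> l * dirv l c)"

lemma chain_shift:
  fixes d e :: int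
  assumes adm: "adm_seq k \<tau>" and mix: "\<forall>l. 0 < l \<and> l < k \<longrightarrow> (\<forall>i. mixcond k l \<beta> (\<tau> i))"
    and de: "d > 0" "e > 0" "coprime d e"
  shows "J < k \<Longrightarrow> \<bar>measure_pmf.prob (walkW k \<tau> m) (Ecop k d e (\<lambda>c. a c + Dsh \<delta> J c) (\<lambda>c. b c + Dsh \<delta> J c))
             - measure_pmf.prob (walkW k \<tau> m) (Ecop k d e a b)\<bar> \<le> real J / sqrt (\<beta> * (real m + 1))"
proof (induction J)
  case 0 then show ?case by (simp add: Dsh_def)
next
  case (Suc J)
  let ?P = "\<lambda>a b. measure_pmf.prob (walkW k \<tau> m) (Ecop k d e a b)"
  let ?a = "\<lambda>c. a c + Dsh \<delta> J c" and ?b = "\<lambda>c. b c + Dsh \<delta> J c"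
  have e1: "(\<lambda>c. a c + Dsh \<delta> (Suc J) c) = mv ?a (\<delta> (Suc J)) (Suc J)"
    "(\<lambda>c. b c + Dsh \<delta> (Suc J) c) = mv ?b (\<delta> (Suc J)) (Suc J)"
    by (simp_all add: Dsh_def mv_def fun_eq_iff algebra_simps)
  have m: "\<forall>i. mixcond k (Suc J) \<beta> (\<tau> i)" using mix Suc.prems by auto
  have "\<bar>?P (mv ?a (\<delta> (Suc J)) (Suc J)) (mv ?b (\<delta> (Suc J)) (Suc J)) - ?P ?a ?b\<bar> \<le> 1 / sqrt (\<beta> * (real m + 1))"
    by (rule core_Ecop[OF adm m de])
  moreover have "\<bar>?P ?a ?b - ?P a b\<bar> \<le> real J / sqrt (\<beta> * (real m + 1))" using Suc by simp
  ultimately show ?case unfolding e1 by (simp add: add_divide_distrib)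
qed

lemma Dsh_full:
  assumes "k \<ge> 1" "(\<Sum>c<k. \<delta> c) = 0" "c < k"
  shows "Dsh \<delta> (k - 1) c = \<delta> c"
proof (cases "c = 0")
  case True
  have "Dsh \<delta> (k - 1) c = (\<Sum>l\<in>{1..k-1}. - \<delta> l)"
    unfolding Dsh_def True by (intro sum.cong refl) (auto simp: dirv_def evec_def)
  also have "\<dots> = - (\<Sum>l\<in>{1..k-1}. \<delta> l)" by (simp add: sum_negf)
  also have "(\<Sum>c<k. \<delta> c) = \<delta> 0 + (\<Sum>l\<in>{1..k-1}. \<delta> l)"
  proof -
    have "{..<k} = insert 0 {1..k-1}" using assms(1) by auto
    then show ?thesis by simp
  qed
  ultimately show ?thesis using assms True by simp
next
  case False
  have "Dsh \<delta> (k - 1) c = (\<Sum>l\<in>{1..k-1}. if l = c then \<delta> l else 0)"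
    unfolding Dsh_def using False by (intro sum.cong refl) (auto simp: dirv_def evec_def)
  also have "\<dots> = \<delta> c" using False assms by (simp add: sum.delta)
  finally show ?thesis .
qed

lemma eq_shift:
  fixes d e :: int
  assumes adm: "adm_seq k \<tau>" and mix: "\<forall>l. 0 < l \<and> l < k \<longrightarrow> (\<forall>i. mixcond k l \<beta> (\<tau> i))"
    and de: "d > 0" "e > 0" "coprime d e" and k: "k \<ge> 1" and s0: "(\<Sum>c<k. \<delta> c) = 0"
  shows "\<bar>measure_pmf.prob (walkW k \<tau> m) (Ecop k d e (\<lambda>c. a c + \<delta> c) (\<lambda>c. b c + \<delta> c))
             - measure_pmf.prob (walkW k \<tau> m) (Ecop k d e a b)\<bar> \<le> real (k - 1) / sqrt (\<beta> * (real m + 1))"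
proof -
  have "Ecop k d e (\<lambda>c. a c + \<delta> c) (\<lambda>c. b c + \<delta> c) = Ecop k d e (\<lambda>c. a c + Dsh \<delta> (k - 1) c) (\<lambda>c. b c + Dsh \<delta> (k - 1) c)"
    using Dsh_full[OF k s0] unfolding Ecop_def by auto
  then show ?thesis using chain_shift[OF adm mix de, of "k - 1" m a \<delta> b] k by simp
qed

lemma prod_primes_dvd:
  fixes D :: "int set"
  assumes "finite D" "\<forall>p\<in>D. prime p"
  shows "(\<Prod>D) dvd z \<longleftrightarrow> (\<forall>p\<in>D. p dvd z)"
  using assms
proof (induction D rule: finite_induct)
  case empty then show ?case by simp
next
  case (insert p D)
  have cop: "coprime p (\<Prod>D)"
    using insert by (intro prod_coprime_right primes_coprime) auto
  show ?case
  proof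
    assume "\<Prod>(insert p D) dvd z"
    then have "p * \<Prod>D dvd z" using insert by simp
    then show "\<forall>q\<in>insert p D. q dvd z" using insert by (auto intro: dvd_mult_left dvd_mult_right)
  next
    assume "\<forall>q\<in>insert p D. q dvd z"
    then have "p dvd z" "\<Prod>D dvd z" using insert by auto
    then have "p * \<Prod>D dvd z" using cop by (rule divides_mult)
    then show "\<Prod>(insert p D) dvd z" using insert by simp
  qed
qed

lemma vis_char:
  fixes y :: "nat \<Rightarrow> int"
  assumes s: "(\<Sum>c<k. y c) = int j" and j: "j > 0"
  shows "visible k y \<longleftrightarrow> (\<forall>p\<in>prime_factors (int j). \<not> (\<forall>c<k. p dvd y c))"
proof
  assume v: "visible k y"
  show "\<forall>p\<in>prime_factors (int j). \<not> (\<forall>c<k. p dvd y c)"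
  proof (intro ballI notI)
    fix p assume p: "p \<in> prime_factors (int j)" and d: "\<forall>c<k. p dvd y c"
    have "p dvd Gcd (y ` {..<k})" using d by (auto intro: Gcd_greatest)
    then have "p dvd 1" using v by (simp add: visible_def)
    then show False using p by (meson in_prime_factors_imp_prime not_prime_unit)
  qed
next
  assume H: "\<forall>p\<in>prime_factors (int j). \<not> (\<forall>c<k. p dvd y c)"
  define g where "g = Gcd (y ` {..<k})"
  show "visible k y"
  proof (rule ccontr)
    assume nv: "\<not> visible k y"
    then have g1: "g \<noteq> 1" by (simp add: visible_def g_def)
    have g0: "g \<noteq> 0"
    proof
      assume "g = 0"
      then have "\<forall>c<k. y c = 0" by (auto simp: g_def)
      then have "(\<Sum>c<k. y c) = 0" by simp
      then show False using s j by simp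
    qed
    have gu: "\<not> is_unit g"
    proof
      assume "is_unit g"
      then have "normalize g = 1" by (rule is_unit_normalize)
      then show False using g1 by (simp add: g_def)
    qed
    obtain p where p: "p dvd g" "prime p" using prime_divisor_exists[OF g0 gu] by blast
    have "\<forall>c<k. p dvd y c" using p(1) unfolding g_def by (auto intro: dvd_trans Gcd_dvd)
    then have "p dvd (\<Sum>c<k. y c)" by (auto intro: dvd_sum)
    then have "p \<in> prime_factors (int j)" using p j s by (auto simp: in_prime_factors_iff)
    then show False using H \<open>\<forall>c<k. p dvd y c\<close> by blast
  qed
qed

lemma prod_one_minus:
  fixes f :: "'a \<Rightarrow> real"
  assumes "finite P"
  shows "(\<Prod>p\<in>P. 1 - f p) = (\<Sum>D\<in>Pow P. (-1)^card D * (\<Prod>p\<in>D. f p))"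
proof -
  have "(\<Prod>p\<in>P. 1 - f p) = (\<Prod>p\<in>P. (- f p) + 1)" by simp
  also have "\<dots> = (\<Sum>D\<in>Pow P. (\<Prod>p\<in>D. - f p) * (\<Prod>p\<in>P - D. 1))"
    by (rule prod_add[OF assms])
  also have "\<dots> = (\<Sum>D\<in>Pow P. (-1)^card D * (\<Prod>p\<in>D. f p))"
    by (simp add: prod_uminus)
  finally show ?thesis .
qed

lemma prod_ind:
  fixes P :: "'a \<Rightarrow> bool"
  assumes "finite D"
  shows "(\<Prod>p\<in>D. (if P p then 1 else 0 :: real)) = (if \<forall>p\<in>D. P p then 1 else 0)"
  using assms by (induction D rule: finite_induct) auto

definition vis :: "nat \<Rightarrow> (nat \<Rightarrow> int) \<Rightarrow> real" where
  "vis k y = (if visible k y then 1 else 0)"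

lemma vis_expand:
  fixes y :: "nat \<Rightarrow> int"
  assumes s: "(\<Sum>c<k. y c) = int j" and j: "j > 0"
  shows "vis k y = (\<Sum>D\<in>Pow (prime_factors (int j)). (-1)^card D * (if \<forall>c<k. \<Prod>D dvd y c then 1 else 0))"
proof -
  let ?P = "prime_factors (int j)"
  have "vis k y = (\<Prod>p\<in>?P. 1 - (if \<forall>c<k. p dvd y c then 1 else 0))"
  proof (cases "visible k y")
    case True
    then have "\<forall>p\<in>?P. \<not> (\<forall>c<k. p dvd y c)" using vis_char[OF s j] by blast
    then have "(\<Prod>p\<in>?P. 1 - (if \<forall>c<k. p dvd y c then 1 else 0 :: real)) = 1"
      by (intro prod.neutral) auto
    then show ?thesis using True by (simp add: vis_def)
  next
    case False
    then obtain p where p: "p \<in> ?P" "\<forall>c<k. p dvd y c" using vis_char[OF s j] by blast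
    then have "(\<Prod>p\<in>?P. 1 - (if \<forall>c<k. p dvd y c then 1 else 0 :: real)) = 0"
      by (intro prod_zero) auto
    then show ?thesis using False by (simp add: vis_def)
  qed
  also have "\<dots> = (\<Sum>D\<in>Pow ?P. (-1)^card D * (\<Prod>p\<in>D. (if \<forall>c<k. p dvd y c then 1 else 0)))"
    by (rule prod_one_minus) simp
  also have "\<dots> = (\<Sum>D\<in>Pow ?P. (-1)^card D * (if \<forall>c<k. \<Prod>D dvd y c then 1 else 0))"
  proof (intro sum.cong refl)
    fix D assume D: "D \<in> Pow ?P"
    then have fD: "finite D" by (auto intro: finite_subset)
    have pD: "\<forall>p\<in>D. prime p" using D by auto
    have "(\<Prod>p\<in>D. (if \<forall>c<k. p dvd y c then 1 else 0 :: real)) = (if \<forall>p\<in>D. \<forall>c<k. p dvd y c then 1 else 0)"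
      by (rule prod_ind[OF fD])
    also have "(\<forall>p\<in>D. \<forall>c<k. p dvd y c) \<longleftrightarrow> (\<forall>c<k. \<Prod>D dvd y c)"
      using prod_primes_dvd[OF fD pD] by blast
    finally show "(-1)^card D * (\<Prod>p\<in>D. (if \<forall>c<k. p dvd y c then 1 else 0)) =
                  (-1)^card D * (if \<forall>c<k. \<Prod>D dvd y c then 1 else 0 :: real)" by simp
  qed
  finally show ?thesis .
qed

lemma prod_pf_dvd:
  assumes "D \<subseteq> prime_factors (x::int)"
  shows "\<Prod>D dvd x"
proof -
  have fD: "finite D" using assms by (auto intro: finite_subset)
  have "\<forall>p\<in>D. prime p" using assms by auto
  moreover have "\<forall>p\<in>D. p dvd x" using assms by auto
  ultimately show ?thesis using prod_primes_dvd[OF fD] by blast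
qed

lemma prod_pf_pos:
  assumes "D \<subseteq> prime_factors (x::int)"
  shows "\<Prod>D > 0"
  using assms by (intro prod_pos) (auto intro: prime_factors_gt_0_int)

lemma two_pow_pf_bound:
  fixes \<eta> :: real
  assumes "\<eta> > 0"
  shows "\<exists>K>0. \<forall>j::nat. j \<ge> 1 \<longrightarrow> 2 ^ card (prime_factors (int j)) \<le> K * real j powr \<eta>"
proof -
  define P0 :: nat where "P0 = nat \<lceil>2 powr (1 / \<eta>)\<rceil>"
  have P0ge: "real P0 \<ge> 2 powr (1 / \<eta>)" unfolding P0_def by linarith
  define K :: real where "K = 2 ^ P0"
  have "\<forall>j::nat. j \<ge> 1 \<longrightarrow> 2 ^ card (prime_factors (int j)) \<le> K * real j powr \<eta>"
  proof (intro allI impI)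
    fix j :: nat assume j: "j \<ge> 1"
    define S where "S = prime_factors (int j)"
    define S1 where "S1 = {p\<in>S. p < int P0}"
    define S2 where "S2 = {p\<in>S. p \<ge> int P0}"
    have fS: "finite S" unfolding S_def by simp
    have Sdisj: "S = S1 \<union> S2" "S1 \<inter> S2 = {}" unfolding S1_def S2_def by auto
    have Spos: "\<forall>p\<in>S. p > 0" unfolding S_def by (auto intro: prime_factors_gt_0_int)
    have cS1: "card S1 \<le> P0"
    proof -
      have "S1 \<subseteq> {0..<int P0}" using Spos unfolding S1_def by fastforce
      then have "card S1 \<le> card {0..<int P0}" by (intro card_mono) auto
      then show ?thesis by simp
    qed
    have cS: "card S = card S1 + card S2" using Sdisj fS
      by (metis card_Un_disjoint finite_Un)
    have "(2::real) ^ card S = 2 ^ card S1 * 2 ^ card S2" by (simp add: cS power_add)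
    also have "\<dots> \<le> 2 ^ P0 * 2 ^ card S2" by (intro mult_right_mono power_increasing cS1) auto
    also have "(2::real) ^ card S2 = (\<Prod>p\<in>S2. 2)" by simp
    also have "\<dots> \<le> (\<Prod>p\<in>S2. real_of_int p powr \<eta>)"
    proof (intro prod_mono conjI)
      fix p assume p: "p \<in> S2"
      then have "real_of_int p \<ge> 2 powr (1 / \<eta>)" using P0ge unfolding S2_def by auto
      then have "real_of_int p powr \<eta> \<ge> (2 powr (1 / \<eta>)) powr \<eta>"
        using assms by (intro powr_mono2) auto
      also have "(2 powr (1 / \<eta>)) powr \<eta> = 2" using assms by (simp add: powr_powr)
      finally show "2 \<le> real_of_int p powr \<eta>" .
    qed simp
    also have "\<dots> = (\<Prod>p\<in>S2. real_of_int p) powr \<eta>" by (simp add: prod_powr_distrib)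
    also have "\<dots> \<le> real j powr \<eta>"
    proof (intro powr_mono2)
      show "0 \<le> \<eta>" using assms by simp
      show "0 \<le> (\<Prod>p\<in>S2. real_of_int p)" using Spos unfolding S2_def by (auto intro: prod_nonneg)
      have "(\<Prod>p\<in>S2. real_of_int p) \<le> (\<Prod>p\<in>S1. real_of_int p) * (\<Prod>p\<in>S2. real_of_int p)"
      proof -
        have "1 \<le> (\<Prod>p\<in>S1. real_of_int p)" using Spos unfolding S1_def by (intro prod_ge_1) auto
        moreover have "0 \<le> (\<Prod>p\<in>S2. real_of_int p)" using Spos unfolding S2_def by (auto intro: prod_nonneg)
        ultimately show ?thesis by (metis mult_le_cancel_right1 mult.commute less_le_not_le)
      qed
      also have "\<dots> = (\<Prod>p\<in>S. real_of_int p)" using Sdisj fS by (simp add: prod.union_disjoint)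
      also have "\<dots> = real_of_int (\<Prod>S)" by simp
      also have "\<dots> \<le> real j"
      proof -
        have "\<Prod>S dvd int j" unfolding S_def by (rule prod_pf_dvd) simp
        then have "\<Prod>S \<le> int j" using j by (intro zdvd_imp_le) auto
        then have "real_of_int (\<Prod>S) \<le> real_of_int (int j)" by (simp only: of_int_le_iff)
        then show ?thesis by simp
      qed
      finally show "(\<Prod>p\<in>S2. real_of_int p) \<le> real j" .
    qed
    finally show "2 ^ card (prime_factors (int j)) \<le> K * real j powr \<eta>"
      unfolding K_def S_def by (simp add: mult_left_mono)
  qed
  moreover have "K > 0" unfolding K_def by simp
  ultimately show ?thesis by blast
qed

lemma exp_cong_support:
  fixes f g :: "'a \<Rightarrow> real"
  assumes "\<And>x. x \<in> set_pmf p \<Longrightarrow> f x = g x"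
  shows "measure_pmf.expectation p f = measure_pmf.expectation p g"
  using assms by (intro integral_cong_AE) (auto simp: AE_measure_pmf_iff)

lemma finite_set_walkW: "adm_seq k \<tau> \<Longrightarrow> finite (set_pmf (walkW k \<tau> m))"
  unfolding walkW_def using finite_set_steps by simp

lemma sum_walkW:
  assumes "adm_seq k \<tau>" "T \<in> set_pmf (walkW k \<tau> m)"
  shows "(\<Sum>c<k. T c) = int m"
proof -
  obtain js where js: "js \<in> set_pmf (steps_pmf k \<tau> m)" "T = walk_pos js m"
    using assms(2) unfolding walkW_def by auto
  then have "length js = m" "set js \<subseteq> {..<k}" using set_steps[OF assms(1)] by auto
  then show ?thesis using js walk_pos_sum[of js k m] by simp
qed

lemma sum_ev: "w < k \<Longrightarrow> (\<Sum>c<k. evec w c) = 1"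
  by (simp add: evec_def)

lemma pair_expand:
  fixes y :: "nat \<Rightarrow> int"
  assumes s: "(\<Sum>c<k. y c) = int j" and j: "j > 0" and w: "w < k"
  shows "vis k y * vis k (\<lambda>c. y c + evec w c) =
    (\<Sum>D\<in>Pow (prime_factors (int j)). \<Sum>U\<in>Pow (prime_factors (int (Suc j))).
        (-1)^(card D + card U) * (if (\<forall>c<k. \<Prod>D dvd y c) \<and> (\<forall>c<k. \<Prod>U dvd y c + evec w c) then 1 else 0))"
proof -
  have s2: "(\<Sum>c<k. y c + evec w c) = int (Suc j)" using s sum_ev[OF w] by (simp add: sum.distrib)
  show ?thesis
    unfolding vis_expand[OF s j] vis_expand[OF s2 zero_less_Suc] sum_product
    by (intro sum.cong refl) (simp add: power_add)
qed

lemma exp_sum: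
  fixes f :: "'b \<Rightarrow> 'a \<Rightarrow> real"
  assumes "finite (set_pmf p)"
  shows "measure_pmf.expectation p (\<lambda>x. \<Sum>i\<in>I. f i x) = (\<Sum>i\<in>I. measure_pmf.expectation p (f i))"
  using assms by (intro Bochner_Integration.integral_sum integrable_measure_pmf_finite)

lemma exp_cmult_ind:
  fixes c :: real
  shows "measure_pmf.expectation p (\<lambda>x. c * indicator S x) = c * measure_pmf.prob p S"
  by simp

definition innerG :: "nat \<Rightarrow> (nat \<Rightarrow> nat \<Rightarrow> real) \<Rightarrow> nat \<Rightarrow> (nat \<Rightarrow> int) \<Rightarrow> nat \<Rightarrow> real" where
  "innerG k \<tau> m x w = measure_pmf.expectation (walkW k \<tau> m)
      (\<lambda>T. vis k (\<lambda>c. x c + T c) * vis k (\<lambda>c. x c + T c + evec w c))"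

lemma inner_expand:
  assumes adm: "adm_seq k \<tau>" and sx: "(\<Sum>c<k. x c) = int s1" and j: "s1 + m > 0" and w: "w < k"
  shows "innerG k \<tau> m x w =
    (\<Sum>D\<in>Pow (prime_factors (int (s1 + m))). \<Sum>U\<in>Pow (prime_factors (int (Suc (s1 + m)))).
        (-1)^(card D + card U) * measure_pmf.prob (walkW k \<tau> m) (Ecop k (\<Prod>D) (\<Prod>U) x (\<lambda>c. x c + evec w c)))"
proof -
  let ?W = "walkW k \<tau> m"
  let ?j = "s1 + m"
  have fin: "finite (set_pmf ?W)" by (rule finite_set_walkW[OF adm])
  have "innerG k \<tau> m x w = measure_pmf.expectation ?W (\<lambda>T.
      (\<Sum>D\<in>Pow (prime_factors (int ?j)). \<Sum>U\<in>Pow (prime_factors (int (Suc ?j))).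
        (-1)^(card D + card U) * indicator (Ecop k (\<Prod>D) (\<Prod>U) x (\<lambda>c. x c + evec w c)) T))"
    unfolding innerG_def
  proof (rule exp_cong_support)
    fix T assume T: "T \<in> set_pmf ?W"
    have sT: "(\<Sum>c<k. x c + T c) = int ?j" using sum_walkW[OF adm T] sx by (simp add: sum.distrib)
    show "vis k (\<lambda>c. x c + T c) * vis k (\<lambda>c. x c + T c + evec w c) =
      (\<Sum>D\<in>Pow (prime_factors (int ?j)). \<Sum>U\<in>Pow (prime_factors (int (Suc ?j))).
        (-1)^(card D + card U) * indicator (Ecop k (\<Prod>D) (\<Prod>U) x (\<lambda>c. x c + evec w c)) T)"
      unfolding pair_expand[OF sT j w]
      by (intro sum.cong refl) (auto simp: Ecop_def indicator_def algebra_simps)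
  qed
  also have "\<dots> = (\<Sum>D\<in>Pow (prime_factors (int ?j)). \<Sum>U\<in>Pow (prime_factors (int (Suc ?j))).
        (-1)^(card D + card U) * measure_pmf.prob ?W (Ecop k (\<Prod>D) (\<Prod>U) x (\<lambda>c. x c + evec w c)))"
    by (simp only: exp_sum[OF fin] exp_cmult_ind)
  finally show ?thesis .
qed

lemma dsum_diff:
  fixes c a b :: "'a \<Rightarrow> 'b \<Rightarrow> real"
  shows "(\<Sum>D\<in>A. \<Sum>U\<in>B. c D U * a D U) - (\<Sum>D\<in>A. \<Sum>U\<in>B. c D U * b D U) =
         (\<Sum>D\<in>A. \<Sum>U\<in>B. c D U * (a D U - b D U))"
  by (simp add: sum_subtractf right_diff_distrib)

lemma double_sum_bound:
  fixes f :: "'a \<Rightarrow> 'b \<Rightarrow> real"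
  assumes "\<And>D U. D \<in> A \<Longrightarrow> U \<in> B \<Longrightarrow> \<bar>f D U\<bar> \<le> c"
  shows "\<bar>\<Sum>D\<in>A. \<Sum>U\<in>B. f D U\<bar> \<le> (\<Sum>D\<in>A. \<Sum>U\<in>B. c)"
proof -
  have "\<bar>\<Sum>D\<in>A. \<Sum>U\<in>B. f D U\<bar> \<le> (\<Sum>D\<in>A. \<bar>\<Sum>U\<in>B. f D U\<bar>)" by (rule sum_abs)
  also have "\<dots> \<le> (\<Sum>D\<in>A. \<Sum>U\<in>B. \<bar>f D U\<bar>)" by (intro sum_mono sum_abs)
  also have "\<dots> \<le> (\<Sum>D\<in>A. \<Sum>U\<in>B. c)" using assms by (intro sum_mono) auto
  finally show ?thesis .
qed

lemma inner_diff:
  assumes adm: "adm_seq k \<tau>" and mix: "\<forall>l. 0 < l \<and> l < k \<longrightarrow> (\<forall>i. mixcond k l \<beta> (\<tau> i))"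
    and k: "k \<ge> 1"
    and sx: "(\<Sum>c<k. x c) = int s1" and sx': "(\<Sum>c<k. x' c) = int s1" and j: "s1 + m > 0" and w: "w < k"
  shows "\<bar>innerG k \<tau> m x' w - innerG k \<tau> m x w\<bar> \<le>
     2 ^ card (prime_factors (int (s1 + m))) * 2 ^ card (prime_factors (int (Suc (s1 + m)))) *
     (real (k - 1) / sqrt (\<beta> * (real m + 1)))"
proof -
  let ?W = "walkW k \<tau> m"
  let ?j = "s1 + m"
  let ?P1 = "prime_factors (int ?j)" and ?P2 = "prime_factors (int (Suc ?j))"
  let ?B = "real (k - 1) / sqrt (\<beta> * (real m + 1))"
  define \<delta> where "\<delta> c = x' c - x c" for c
  have s0: "(\<Sum>c<k. \<delta> c) = 0" unfolding \<delta>_def using sx sx' by (simp add: sum_subtractf)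
  have eq1: "innerG k \<tau> m x' w - innerG k \<tau> m x w =
    (\<Sum>D\<in>Pow ?P1. \<Sum>U\<in>Pow ?P2. (-1)^(card D + card U) *
       (measure_pmf.prob ?W (Ecop k (\<Prod>D) (\<Prod>U) x' (\<lambda>c. x' c + evec w c)) -
        measure_pmf.prob ?W (Ecop k (\<Prod>D) (\<Prod>U) x (\<lambda>c. x c + evec w c))))"
    unfolding inner_expand[OF adm sx j w] inner_expand[OF adm sx' j w]
    by (rule dsum_diff[where c = "\<lambda>D U. (-1)^(card D + card U)"
        and a = "\<lambda>D U. measure_pmf.prob ?W (Ecop k (\<Prod>D) (\<Prod>U) x' (\<lambda>c. x' c + evec w c))"
        and b = "\<lambda>D U. measure_pmf.prob ?W (Ecop k (\<Prod>D) (\<Prod>U) x (\<lambda>c. x c + evec w c))"])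
  have bd: "\<bar>\<Sum>D\<in>Pow ?P1. \<Sum>U\<in>Pow ?P2. (-1)^(card D + card U) *
       (measure_pmf.prob ?W (Ecop k (\<Prod>D) (\<Prod>U) x' (\<lambda>c. x' c + evec w c)) -
        measure_pmf.prob ?W (Ecop k (\<Prod>D) (\<Prod>U) x (\<lambda>c. x c + evec w c)))\<bar> \<le> (\<Sum>D\<in>Pow ?P1. \<Sum>U\<in>Pow ?P2. ?B)"
  proof (rule double_sum_bound)
    fix D U assume D: "D \<in> Pow ?P1" and U: "U \<in> Pow ?P2"
    have d: "\<Prod>D > 0" using D by (intro prod_pf_pos[of D "int ?j"]) auto
    have e: "\<Prod>U > 0" using U by (intro prod_pf_pos[of U "int (Suc ?j)"]) auto
    have cop: "coprime (\<Prod>D) (\<Prod>U)"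
    proof (rule coprime_divisors)
      show "\<Prod>D dvd int ?j" using D by (intro prod_pf_dvd) auto
      have "\<Prod>U dvd int (Suc ?j)" using U by (intro prod_pf_dvd) auto
      then show "\<Prod>U dvd int ?j + 1" by (simp add: ac_simps)
      show "coprime (int ?j) (int ?j + 1)" by simp
    qed
    have h: "\<bar>measure_pmf.prob ?W (Ecop k (\<Prod>D) (\<Prod>U) (\<lambda>c. x c + \<delta> c) (\<lambda>c. (x c + evec w c) + \<delta> c)) -
      measure_pmf.prob ?W (Ecop k (\<Prod>D) (\<Prod>U) x (\<lambda>c. x c + evec w c))\<bar> \<le> ?B"
      by (rule eq_shift[OF adm mix d e cop k s0])
    have eqs: "(\<lambda>c. x c + \<delta> c) = x'" "(\<lambda>c. (x c + evec w c) + \<delta> c) = (\<lambda>c. x' c + evec w c)"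
      unfolding \<delta>_def by auto
    have ab: "\<bar>(-1)^n * (r::real)\<bar> = \<bar>r\<bar>" for n r by (simp add: abs_mult power_abs)
    show "\<bar>(-1)^(card D + card U) *
       (measure_pmf.prob ?W (Ecop k (\<Prod>D) (\<Prod>U) x' (\<lambda>c. x' c + evec w c)) -
        measure_pmf.prob ?W (Ecop k (\<Prod>D) (\<Prod>U) x (\<lambda>c. x c + evec w c)))\<bar> \<le> ?B"
      unfolding ab using h unfolding eqs .
  qed
  have card: "(\<Sum>D\<in>Pow ?P1. \<Sum>U\<in>Pow ?P2. ?B) = 2 ^ card ?P1 * 2 ^ card ?P2 * ?B" by (simp add: card_Pow)
  show ?thesis unfolding eq1 using bd unfolding card .
qed

lemma exp_mono_support:
  fixes f g :: "'a \<Rightarrow> real"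
  assumes "finite (set_pmf p)" "\<And>x. x \<in> set_pmf p \<Longrightarrow> f x \<le> g x"
  shows "measure_pmf.expectation p f \<le> measure_pmf.expectation p g"
  using assms by (intro integral_mono_AE) (auto intro: integrable_measure_pmf_finite simp: AE_measure_pmf_iff)

lemma exp_swap:
  fixes f :: "'a \<Rightarrow> 'b \<Rightarrow> real"
  assumes fA: "finite (set_pmf A)" and fB: "finite (set_pmf B)"
  shows "measure_pmf.expectation A (\<lambda>a. measure_pmf.expectation B (\<lambda>b. f a b)) =
         measure_pmf.expectation B (\<lambda>b. measure_pmf.expectation A (\<lambda>a. f a b))"
proof -
  have "measure_pmf.expectation A (\<lambda>a. measure_pmf.expectation B (\<lambda>b. f a b)) =
        measure_pmf.expectation (bind_pmf A (\<lambda>a. map_pmf (\<lambda>b. (a, b)) B)) (\<lambda>(a, b). f a b)"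
    using fA fB by (subst exp_bind) auto
  also have "bind_pmf A (\<lambda>a. map_pmf (\<lambda>b. (a, b)) B) = bind_pmf B (\<lambda>b. map_pmf (\<lambda>a. (a, b)) A)"
    unfolding map_pmf_def by (rule bind_commute_pmf)
  also have "measure_pmf.expectation (bind_pmf B (\<lambda>b. map_pmf (\<lambda>a. (a, b)) A)) (\<lambda>(a, b). f a b) =
        measure_pmf.expectation B (\<lambda>b. measure_pmf.expectation A (\<lambda>a. f a b))"
    using fA fB by (subst exp_bind) auto
  finally show ?thesis .
qed

lemma cov_bound:
  fixes f g :: "'a \<Rightarrow> real"
  assumes fin: "finite (set_pmf p)"
    and f01: "\<And>x. x \<in> set_pmf p \<Longrightarrow> 0 \<le> f x \<and> f x \<le> 1"
    and gB: "\<And>x y. x \<in> set_pmf p \<Longrightarrow> y \<in> set_pmf p \<Longrightarrow> \<bar>g x - g y\<bar> \<le> B"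
  shows "\<bar>measure_pmf.expectation p (\<lambda>x. f x * g x) - measure_pmf.expectation p f * measure_pmf.expectation p g\<bar> \<le> B"
proof -
  let ?E = "measure_pmf.expectation p"
  have int: "integrable (measure_pmf p) h" for h :: "'a \<Rightarrow> real" by (rule integrable_measure_pmf_finite[OF fin])
  have dev: "\<bar>g x - ?E g\<bar> \<le> B" if x: "x \<in> set_pmf p" for x
  proof -
    have "g x - ?E g = ?E (\<lambda>y. g x - g y)"
      by (simp add: Bochner_Integration.integral_diff[OF int int] measure_pmf.prob_space)
    also have "\<bar>\<dots>\<bar> \<le> ?E (\<lambda>y. \<bar>g x - g y\<bar>)" by (rule integral_abs_bound)
    also have "\<dots> \<le> ?E (\<lambda>y. B)" using fin gB[OF x] by (intro exp_mono_support) auto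
    also have "\<dots> = B" by (simp add: measure_pmf.prob_space)
    finally show ?thesis .
  qed
  have "?E (\<lambda>x. f x * g x) - ?E f * ?E g = ?E (\<lambda>x. f x * (g x - ?E g))"
    by (simp add: right_diff_distrib Bochner_Integration.integral_diff[OF int int])
  also have "\<bar>\<dots>\<bar> \<le> ?E (\<lambda>x. \<bar>f x * (g x - ?E g)\<bar>)" by (rule integral_abs_bound)
  also have "\<dots> \<le> ?E (\<lambda>x. B)"
  proof (rule exp_mono_support[OF fin])
    fix x assume x: "x \<in> set_pmf p"
    have "\<bar>f x * (g x - ?E g)\<bar> = \<bar>f x\<bar> * \<bar>g x - ?E g\<bar>" by (rule abs_mult)
    also have "\<dots> \<le> 1 * B" using f01[OF x] dev[OF x] by (intro mult_mono) auto
    finally show "\<bar>f x * (g x - ?E g)\<bar> \<le> B" by simp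
  qed
  also have "\<dots> = B" by (simp add: measure_pmf.prob_space)
  finally show ?thesis .
qed

definition GN :: "nat \<Rightarrow> (nat \<Rightarrow> nat \<Rightarrow> real) \<Rightarrow> nat \<Rightarrow> nat \<Rightarrow> (nat \<Rightarrow> int) \<Rightarrow> real" where
  "GN k \<tau> N m x = measure_pmf.expectation (steps_pmf k \<tau> N)
      (\<lambda>v. vis k (\<lambda>c. x c + walk_pos v m c) * vis k (\<lambda>c. x c + walk_pos v (Suc m) c))"

lemma adm_shift: "adm_seq k \<tau> \<Longrightarrow> adm_seq k (\<lambda>i. \<tau> (i + a))"
  by (simp add: adm_seq_def)

lemma GN_inner:
  assumes adm: "adm_seq k \<tau>" and N: "N \<ge> Suc m"
  shows "GN k \<tau> N m x = measure_pmf.expectation (steps_pmf k (\<lambda>i. \<tau> (i + m)) (N - m)) (\<lambda>v2. innerG k \<tau> m x (hd v2))"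
proof -
  let ?V1 = "steps_pmf k \<tau> m" and ?V2 = "steps_pmf k (\<lambda>i. \<tau> (i + m)) (N - m)"
  have f1: "finite (set_pmf ?V1)" by (rule finite_set_steps[OF adm])
  have f2: "finite (set_pmf ?V2)" by (rule finite_set_steps[OF adm_shift[OF adm]])
  have split: "steps_pmf k \<tau> N = bind_pmf ?V1 (\<lambda>u. map_pmf (\<lambda>v. u @ v) ?V2)"
    using steps_split[of k \<tau> m "N - m"] N by simp
  let ?f = "\<lambda>T w. vis k (\<lambda>c. x c + T c) * vis k (\<lambda>c. x c + T c + evec w c)"
  have "GN k \<tau> N m x = measure_pmf.expectation ?V1 (\<lambda>u. measure_pmf.expectation ?V2
          (\<lambda>v. vis k (\<lambda>c. x c + walk_pos (u @ v) m c) * vis k (\<lambda>c. x c + walk_pos (u @ v) (Suc m) c)))"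
    unfolding GN_def split using f1 f2 by (subst exp_bind) auto
  also have "\<dots> = measure_pmf.expectation ?V1 (\<lambda>u. measure_pmf.expectation ?V2 (\<lambda>v. ?f (walk_pos u m) (hd v)))"
  proof (rule exp_cong_support)
    fix u assume u: "u \<in> set_pmf ?V1"
    then have lu: "length u = m" using set_steps[OF adm] by auto
    show "measure_pmf.expectation ?V2 (\<lambda>v. vis k (\<lambda>c. x c + walk_pos (u @ v) m c) * vis k (\<lambda>c. x c + walk_pos (u @ v) (Suc m) c))
        = measure_pmf.expectation ?V2 (\<lambda>v. ?f (walk_pos u m) (hd v))"
    proof (rule exp_cong_support)
      fix v assume v: "v \<in> set_pmf ?V2"
      then have lv: "length v = N - m" using set_steps[OF adm_shift[OF adm]] by auto
      then have "v \<noteq> []" using N by auto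
      then obtain w v' where vw: "v = w # v'" by (cases v) auto
      have e1: "walk_pos (u @ v) m = walk_pos u m" using walk_pos_app1[of m u v] lu by simp
      have e2: "walk_pos (u @ v) (Suc m) = walk_pos u m + evec w"
        using walk_pos_app2[of u v 1] lu vw walk_pos_Cons1[of w v'] by simp
      show "vis k (\<lambda>c. x c + walk_pos (u @ v) m c) * vis k (\<lambda>c. x c + walk_pos (u @ v) (Suc m) c) = ?f (walk_pos u m) (hd v)"
        unfolding e1 e2 using vw by (simp add: add.assoc)
    qed
  qed
  also have "\<dots> = measure_pmf.expectation ?V2 (\<lambda>v. measure_pmf.expectation ?V1 (\<lambda>u. ?f (walk_pos u m) (hd v)))"
    by (rule exp_swap[OF f1 f2])
  also have "\<dots> = measure_pmf.expectation ?V2 (\<lambda>v2. innerG k \<tau> m x (hd v2))"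
    unfolding innerG_def walkW_def by simp
  finally show ?thesis .
qed

lemma GN_diff:
  assumes adm: "adm_seq k \<tau>" and mix: "\<forall>l. 0 < l \<and> l < k \<longrightarrow> (\<forall>i. mixcond k l \<beta> (\<tau> i))"
    and k: "k \<ge> 1" and N: "N \<ge> Suc m"
    and sx: "(\<Sum>c<k. x c) = int s1" and sx': "(\<Sum>c<k. x' c) = int s1" and j: "s1 + m > 0"
  shows "\<bar>GN k \<tau> N m x' - GN k \<tau> N m x\<bar> \<le>
     2 ^ card (prime_factors (int (s1 + m))) * 2 ^ card (prime_factors (int (Suc (s1 + m)))) *
     (real (k - 1) / sqrt (\<beta> * (real m + 1)))"
proof -
  let ?V2 = "steps_pmf k (\<lambda>i. \<tau> (i + m)) (N - m)"
  let ?B = "2 ^ card (prime_factors (int (s1 + m))) * 2 ^ card (prime_factors (int (Suc (s1 + m)))) *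
     (real (k - 1) / sqrt (\<beta> * (real m + 1)))"
  have f2: "finite (set_pmf ?V2)" by (rule finite_set_steps[OF adm_shift[OF adm]])
  have int: "integrable (measure_pmf ?V2) h" for h :: "nat list \<Rightarrow> real" by (rule integrable_measure_pmf_finite[OF f2])
  have "GN k \<tau> N m x' - GN k \<tau> N m x = measure_pmf.expectation ?V2 (\<lambda>v2. innerG k \<tau> m x' (hd v2) - innerG k \<tau> m x (hd v2))"
    unfolding GN_inner[OF adm N] by (simp add: Bochner_Integration.integral_diff[OF int int])
  moreover have "\<bar>measure_pmf.expectation ?V2 (\<lambda>v2. innerG k \<tau> m x' (hd v2) - innerG k \<tau> m x (hd v2))\<bar>
      \<le> measure_pmf.expectation ?V2 (\<lambda>v2. \<bar>innerG k \<tau> m x' (hd v2) - innerG k \<tau> m x (hd v2)\<bar>)"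
    by (rule integral_abs_bound)
  moreover have "measure_pmf.expectation ?V2 (\<lambda>v2. \<bar>innerG k \<tau> m x' (hd v2) - innerG k \<tau> m x (hd v2)\<bar>)
      \<le> measure_pmf.expectation ?V2 (\<lambda>v2. ?B)"
  proof (rule exp_mono_support[OF f2])
    fix v assume v: "v \<in> set_pmf ?V2"
    then have "length v = N - m" "set v \<subseteq> {..<k}" using set_steps[OF adm_shift[OF adm]] by auto
    then have "hd v < k" using N by (cases v) auto
    then show "\<bar>innerG k \<tau> m x' (hd v) - innerG k \<tau> m x (hd v)\<bar> \<le> ?B"
      by (rule inner_diff[OF adm mix k sx sx' j])
  qed
  moreover have "measure_pmf.expectation ?V2 (\<lambda>v2. ?B) = ?B" by (simp add: measure_pmf.prob_space)
  ultimately show ?thesis by linarith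
qed

definition Yv :: "nat \<Rightarrow> nat list \<Rightarrow> nat \<Rightarrow> real" where
  "Yv k js s = X_ind k js s * X_ind k js (Suc s)"

lemma X_ind_vis: "X_ind k js i = vis k (walk_pos js i)"
  by (simp add: X_ind_def vis_def)

lemma vis_01: "0 \<le> vis k y \<and> vis k y \<le> 1"
  by (simp add: vis_def)

lemma Yv_01: "0 \<le> Yv k js s \<and> Yv k js s \<le> 1"
  by (simp add: Yv_def X_ind_def)

lemma plus_fun_lam: "(f + g) = (\<lambda>c. f c + g c)"
  by (simp add: fun_eq_iff)

lemma steps_mem:
  assumes "adm_seq k \<sigma>" "u \<in> set_pmf (steps_pmf k \<sigma> m)"
  shows "length u = m" "set u \<subseteq> {..<k}"
  using set_steps[OF assms(1), of m] assms(2) by blast+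

lemma cov_walk:
  assumes adm: "adm_seq k \<sigma>" and mix: "\<forall>l. 0 < l \<and> l < k \<longrightarrow> (\<forall>i. mixcond k l \<beta> (\<sigma> i))"
    and k: "k \<ge> 1" and ss: "s < s'" "s' \<le> n"
  shows "\<bar>measure_pmf.expectation (steps_pmf k \<sigma> (Suc n)) (\<lambda>js. Yv k js s * Yv k js s') -
          measure_pmf.expectation (steps_pmf k \<sigma> (Suc n)) (\<lambda>js. Yv k js s) *
          measure_pmf.expectation (steps_pmf k \<sigma> (Suc n)) (\<lambda>js. Yv k js s')\<bar>
     \<le> 2 ^ card (prime_factors (int s')) * 2 ^ card (prime_factors (int (Suc s'))) *
        (real (k - 1) / sqrt (\<beta> * real (s' - s)))"
proof -
  define m where "m = s' - Suc s"
  define \<sigma>1 where "\<sigma>1 = (\<lambda>i. \<sigma> (i + Suc s))"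
  let ?U = "steps_pmf k \<sigma> (Suc s)" and ?V = "steps_pmf k \<sigma>1 (n - s)"
  let ?\<Omega> = "steps_pmf k \<sigma> (Suc n)"
  have adm1: "adm_seq k \<sigma>1" unfolding \<sigma>1_def by (rule adm_shift[OF adm])
  have mix1: "\<forall>l. 0 < l \<and> l < k \<longrightarrow> (\<forall>i. mixcond k l \<beta> (\<sigma>1 i))" using mix unfolding \<sigma>1_def by auto
  have fU: "finite (set_pmf ?U)" by (rule finite_set_steps[OF adm])
  have fV: "finite (set_pmf ?V)" by (rule finite_set_steps[OF adm1])
  have split: "?\<Omega> = bind_pmf ?U (\<lambda>u. map_pmf (\<lambda>v. u @ v) ?V)"
    using steps_split[of k \<sigma> "Suc s" "n - s"] ss unfolding \<sigma>1_def by simp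
  have E\<Omega>: "measure_pmf.expectation ?\<Omega> h = measure_pmf.expectation ?U (\<lambda>u. measure_pmf.expectation ?V (\<lambda>v. h (u @ v)))" for h :: "nat list \<Rightarrow> real"
    unfolding split using fU fV by (subst exp_bind) auto
  define x where "x u = walk_pos u (Suc s)" for u
  define G where "G u = GN k \<sigma>1 (n - s) m (x u)" for u
  have s'eq: "s' = Suc s + m" "Suc s' = Suc s + Suc m" unfolding m_def using ss by auto
  have Ys: "Yv k (u @ v) s = Yv k u s" if "u \<in> set_pmf ?U" for u v
  proof -
    have "length u = Suc s" using steps_mem[OF adm that] by simp
    then show ?thesis by (simp add: Yv_def X_ind_def walk_pos_app1)
  qed
  have Ys': "Yv k (u @ v) s' = vis k (\<lambda>c. x u c + walk_pos v m c) * vis k (\<lambda>c. x u c + walk_pos v (Suc m) c)"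
    if "u \<in> set_pmf ?U" for u v
  proof -
    have lu: "length u = Suc s" using steps_mem[OF adm that] by simp
    have "walk_pos (u @ v) s' = (\<lambda>c. x u c + walk_pos v m c)"
      unfolding s'eq x_def using walk_pos_app2[of u v m] lu by (simp add: plus_fun_lam)
    moreover have "walk_pos (u @ v) (Suc s') = (\<lambda>c. x u c + walk_pos v (Suc m) c)"
      unfolding s'eq x_def using walk_pos_app2[of u v "Suc m"] lu by (simp add: plus_fun_lam)
    ultimately show ?thesis by (simp add: Yv_def X_ind_vis)
  qed
  have intV: "integrable (measure_pmf ?V) h" for h :: "nat list \<Rightarrow> real" by (rule integrable_measure_pmf_finite[OF fV])
  have e1: "measure_pmf.expectation ?\<Omega> (\<lambda>js. Yv k js s * Yv k js s') = measure_pmf.expectation ?U (\<lambda>u. Yv k u s * G u)"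
    unfolding E\<Omega>
  proof (rule exp_cong_support)
    fix u assume u: "u \<in> set_pmf ?U"
    have "measure_pmf.expectation ?V (\<lambda>v. Yv k (u @ v) s * Yv k (u @ v) s') =
          measure_pmf.expectation ?V (\<lambda>v. Yv k u s * (vis k (\<lambda>c. x u c + walk_pos v m c) * vis k (\<lambda>c. x u c + walk_pos v (Suc m) c)))"
      using Ys[OF u] Ys'[OF u] by simp
    also have "\<dots> = Yv k u s * G u" unfolding G_def GN_def by simp
    finally show "measure_pmf.expectation ?V (\<lambda>v. Yv k (u @ v) s * Yv k (u @ v) s') = Yv k u s * G u" .
  qed
  have e2: "measure_pmf.expectation ?\<Omega> (\<lambda>js. Yv k js s) = measure_pmf.expectation ?U (\<lambda>u. Yv k u s)"
    unfolding E\<Omega> by (rule exp_cong_support) (simp add: Ys measure_pmf.prob_space)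
  have e3: "measure_pmf.expectation ?\<Omega> (\<lambda>js. Yv k js s') = measure_pmf.expectation ?U G"
    unfolding E\<Omega> by (rule exp_cong_support) (simp add: Ys' G_def GN_def)
  have sx: "(\<Sum>c<k. x u c) = int (Suc s)" if "u \<in> set_pmf ?U" for u
  proof -
    have "length u = Suc s" "set u \<subseteq> {..<k}" using steps_mem[OF adm that] by simp_all
    then show ?thesis unfolding x_def using walk_pos_sum[of u k "Suc s"] by simp
  qed
  have Gd: "\<bar>G u - G u'\<bar> \<le> 2 ^ card (prime_factors (int s')) * 2 ^ card (prime_factors (int (Suc s'))) *
        (real (k - 1) / sqrt (\<beta> * real (s' - s)))" if "u \<in> set_pmf ?U" "u' \<in> set_pmf ?U" for u u'
  proof -
    have N: "n - s \<ge> Suc m" unfolding m_def using ss by auto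
    have "\<bar>GN k \<sigma>1 (n - s) m (x u) - GN k \<sigma>1 (n - s) m (x u')\<bar> \<le>
     2 ^ card (prime_factors (int (Suc s + m))) * 2 ^ card (prime_factors (int (Suc (Suc s + m)))) *
     (real (k - 1) / sqrt (\<beta> * (real m + 1)))"
      by (rule GN_diff[OF adm1 mix1 k N sx[OF that(2)] sx[OF that(1)]]) simp
    moreover have "real m + 1 = real (s' - s)" unfolding m_def using ss by auto
    ultimately show ?thesis unfolding G_def s'eq by simp
  qed
  show ?thesis unfolding e1 e2 e3
    by (rule cov_bound[OF fU], rule Yv_01, rule Gd, assumption+)
qed

lemma var_expand:
  fixes Y :: "nat \<Rightarrow> 'a \<Rightarrow> real"
  assumes fin: "finite (set_pmf p)"
  shows "measure_pmf.variance p (\<lambda>x. c * (\<Sum>s\<in>S. Y s x)) =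
    c^2 * (\<Sum>s\<in>S. \<Sum>s'\<in>S. (measure_pmf.expectation p (\<lambda>x. Y s x * Y s' x) -
                 measure_pmf.expectation p (Y s) * measure_pmf.expectation p (Y s')))"
proof -
  let ?E = "measure_pmf.expectation p"
  have int: "integrable (measure_pmf p) h" for h :: "'a \<Rightarrow> real" by (rule integrable_measure_pmf_finite[OF fin])
  define a where "a s = ?E (Y s)" for s
  have ER: "?E (\<lambda>x. c * (\<Sum>s\<in>S. Y s x)) = c * (\<Sum>s\<in>S. a s)"
    unfolding a_def by (simp add: exp_sum[OF fin])
  have pt: "(c * (\<Sum>s\<in>S. Y s x) - c * (\<Sum>s\<in>S. a s))^2 =
      c^2 * (\<Sum>s\<in>S. \<Sum>s'\<in>S. (Y s x - a s) * (Y s' x - a s'))" for x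
  proof -
    have "c * (\<Sum>s\<in>S. Y s x) - c * (\<Sum>s\<in>S. a s) = c * (\<Sum>s\<in>S. Y s x - a s)"
      by (simp add: sum_subtractf right_diff_distrib)
    then show ?thesis by (simp add: power2_eq_square sum_product algebra_simps)
  qed
  have "measure_pmf.variance p (\<lambda>x. c * (\<Sum>s\<in>S. Y s x)) =
      ?E (\<lambda>x. c^2 * (\<Sum>s\<in>S. \<Sum>s'\<in>S. (Y s x - a s) * (Y s' x - a s')))"
    unfolding ER pt by simp
  also have "\<dots> = c^2 * (\<Sum>s\<in>S. \<Sum>s'\<in>S. ?E (\<lambda>x. (Y s x - a s) * (Y s' x - a s')))"
    by (simp add: exp_sum[OF fin])
  also have "\<dots> = c^2 * (\<Sum>s\<in>S. \<Sum>s'\<in>S. (?E (\<lambda>x. Y s x * Y s' x) - ?E (Y s) * ?E (Y s')))"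
  proof -
    have "?E (\<lambda>x. (Y s x - a s) * (Y s' x - a s')) = ?E (\<lambda>x. Y s x * Y s' x) - ?E (Y s) * ?E (Y s')" for s s'
    proof -
      have "?E (\<lambda>x. (Y s x - a s) * (Y s' x - a s')) =
            ?E (\<lambda>x. Y s x * Y s' x - a s' * Y s x - a s * Y s' x + a s * a s')"
        by (simp add: algebra_simps)
      also have "\<dots> = ?E (\<lambda>x. Y s x * Y s' x) - a s' * ?E (Y s) - a s * ?E (Y s') + a s * a s'"
        by (simp add: Bochner_Integration.integral_diff[OF int int] Bochner_Integration.integral_add[OF int int]
            measure_pmf.prob_space)
      finally show ?thesis unfolding a_def by simp
    qed
    then show ?thesis by simp
  qed
  finally show ?thesis .
qed

lemma inv_sqrt_sum: "(\<Sum>d\<in>{1..n}. 1 / sqrt (real d)) \<le> 2 * sqrt (real n)"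
proof (induction n)
  case 0 then show ?case by simp
next
  case (Suc n)
  have a: "sqrt (real n) \<le> sqrt (real (Suc n))" by simp
  have pos: "sqrt (real (Suc n)) > 0" by simp
  have key: "1 / sqrt (real (Suc n)) \<le> 2 * (sqrt (real (Suc n)) - sqrt (real n))"
  proof -
    have "(sqrt (real (Suc n)) - sqrt (real n)) * (sqrt (real (Suc n)) + sqrt (real n)) = 1"
      by (simp add: algebra_simps)
    moreover have "sqrt (real (Suc n)) + sqrt (real n) \<le> 2 * sqrt (real (Suc n))" using a by simp
    moreover have "sqrt (real (Suc n)) - sqrt (real n) \<ge> 0" using a by simp
    ultimately have "1 \<le> (sqrt (real (Suc n)) - sqrt (real n)) * (2 * sqrt (real (Suc n)))"
      by (metis mult_left_mono)
    then show ?thesis using pos by (simp add: field_simps)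
  qed
  have "(\<Sum>d\<in>{1..Suc n}. 1 / sqrt (real d)) = (\<Sum>d\<in>{1..n}. 1 / sqrt (real d)) + 1 / sqrt (real (Suc n))"
    by simp
  also have "\<dots> \<le> 2 * sqrt (real n) + 2 * (sqrt (real (Suc n)) - sqrt (real n))"
    using Suc.IH key by linarith
  also have "\<dots> = 2 * sqrt (real (Suc n))" by simp
  finally show ?case .
qed

lemma row_sum:
  assumes "s \<in> {1..n}"
  shows "(\<Sum>s'\<in>{1..n}. if s' = s then 0 else 1 / sqrt (real (if s < s' then s' - s else s - s'))) \<le> 4 * sqrt (real n)"
proof -
  let ?g = "\<lambda>d::nat. 1 / sqrt (real d)"
  let ?f = "\<lambda>s'. if s' = s then 0 else 1 / sqrt (real (if s < s' then s' - s else s - s'))"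
  have split: "{1..n} = {1..<s} \<union> {s} \<union> {s<..n}" using assms by auto
  have "(\<Sum>s'\<in>{1..n}. ?f s') = (\<Sum>s'\<in>{1..<s}. ?f s') + (\<Sum>s'\<in>{s}. ?f s') + (\<Sum>s'\<in>{s<..n}. ?f s')"
    unfolding split by (subst sum.union_disjoint, auto)+
  also have "(\<Sum>s'\<in>{1..<s}. ?f s') = (\<Sum>s'\<in>{1..<s}. ?g (s - s'))" by (intro sum.cong) auto
  also have "\<dots> = (\<Sum>d\<in>(\<lambda>s'. s - s') ` {1..<s}. ?g d)"
    by (subst sum.reindex) (auto simp: inj_on_def)
  also have "\<dots> \<le> (\<Sum>d\<in>{1..n}. ?g d)" using assms by (intro sum_mono2) auto
  also have "(\<Sum>s'\<in>{s<..n}. ?f s') = (\<Sum>s'\<in>{s<..n}. ?g (s' - s))" by (intro sum.cong) auto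
  also have "\<dots> = (\<Sum>d\<in>(\<lambda>s'. s' - s) ` {s<..n}. ?g d)"
    by (subst sum.reindex) (auto simp: inj_on_def)
  also have "\<dots> \<le> (\<Sum>d\<in>{1..n}. ?g d)" using assms by (intro sum_mono2) auto
  finally have "(\<Sum>s'\<in>{1..n}. ?f s') \<le> 2 * (\<Sum>d\<in>{1..n}. ?g d)" by simp
  also have "\<dots> \<le> 4 * sqrt (real n)" using inv_sqrt_sum[of n] by simp
  finally show ?thesis .
qed

lemma cv_offdiag:
  fixes K0 \<eta> \<beta> :: real
  assumes adm: "adm_seq k \<sigma>" and mix: "\<forall>l. 0 < l \<and> l < k \<longrightarrow> (\<forall>i. mixcond k l \<beta> (\<sigma> i))"
    and k: "k \<ge> 1" and ss: "s < s'" "s' \<le> n"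
    and K0: "\<forall>j::nat. j \<ge> 1 \<longrightarrow> 2 ^ card (prime_factors (int j)) \<le> K0 * real j powr \<eta>" "K0 > 0"
    and \<eta>: "\<eta> \<ge> 0" and \<beta>: "\<beta> > 0"
  shows "\<bar>measure_pmf.expectation (steps_pmf k \<sigma> (Suc n)) (\<lambda>js. Yv k js s * Yv k js s') -
          measure_pmf.expectation (steps_pmf k \<sigma> (Suc n)) (\<lambda>js. Yv k js s) *
          measure_pmf.expectation (steps_pmf k \<sigma> (Suc n)) (\<lambda>js. Yv k js s')\<bar>
     \<le> K0^2 * (real n + 1) powr (2 * \<eta>) * (real (k - 1) / sqrt \<beta> * (1 / sqrt (real (s' - s))))"
proof -
  have s'pos: "s' \<ge> 1" using ss by simp
  have a1: "2 ^ card (prime_factors (int s')) \<le> K0 * (real n + 1) powr \<eta>"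
  proof -
    have "(2::real) ^ card (prime_factors (int s')) \<le> K0 * real s' powr \<eta>" using K0(1)[rule_format, OF s'pos] .
    also have "\<dots> \<le> K0 * (real n + 1) powr \<eta>" using K0(2) \<eta> ss by (intro mult_left_mono powr_mono2) auto
    finally show ?thesis .
  qed
  have a2: "2 ^ card (prime_factors (int (Suc s'))) \<le> K0 * (real n + 1) powr \<eta>"
  proof -
    have "(2::real) ^ card (prime_factors (int (Suc s'))) \<le> K0 * real (Suc s') powr \<eta>"
      using K0(1)[rule_format, of "Suc s'"] by simp
    also have "\<dots> \<le> K0 * (real n + 1) powr \<eta>" using K0(2) \<eta> ss by (intro mult_left_mono powr_mono2) auto
    finally show ?thesis .
  qed
  have "(2::real) ^ card (prime_factors (int s')) * 2 ^ card (prime_factors (int (Suc s'))) \<le>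
        (K0 * (real n + 1) powr \<eta>) * (K0 * (real n + 1) powr \<eta>)"
    using a1 a2 K0(2) by (intro mult_mono) auto
  also have "\<dots> = K0^2 * ((real n + 1) powr \<eta> * (real n + 1) powr \<eta>)"
    by (simp only: power2_eq_square ac_simps)
  also have "(real n + 1) powr \<eta> * (real n + 1) powr \<eta> = (real n + 1) powr (2 * \<eta>)"
    by (simp only: powr_add[symmetric] mult_2)
  finally have b: "(2::real) ^ card (prime_factors (int s')) * 2 ^ card (prime_factors (int (Suc s'))) \<le> K0^2 * (real n + 1) powr (2 * \<eta>)" .
  have c: "real (k - 1) / sqrt (\<beta> * real (s' - s)) = real (k - 1) / sqrt \<beta> * (1 / sqrt (real (s' - s)))"
    by (simp add: real_sqrt_mult)
  have "\<bar>measure_pmf.expectation (steps_pmf k \<sigma> (Suc n)) (\<lambda>js. Yv k js s * Yv k js s') -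
          measure_pmf.expectation (steps_pmf k \<sigma> (Suc n)) (\<lambda>js. Yv k js s) *
          measure_pmf.expectation (steps_pmf k \<sigma> (Suc n)) (\<lambda>js. Yv k js s')\<bar>
     \<le> 2 ^ card (prime_factors (int s')) * 2 ^ card (prime_factors (int (Suc s'))) *
        (real (k - 1) / sqrt (\<beta> * real (s' - s)))"
    by (rule cov_walk[OF adm mix k ss])
  also have "\<dots> \<le> K0^2 * (real n + 1) powr (2 * \<eta>) * (real (k - 1) / sqrt \<beta> * (1 / sqrt (real (s' - s))))"
  proof -
    have "0 \<le> real (k - 1) / sqrt \<beta> * (1 / sqrt (real (s' - s)))" using \<beta> by simp
    then show ?thesis unfolding c using b by (rule mult_right_mono[rotated])
  qed
  finally show ?thesis .
qed

lemma cv_diag: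
  assumes "finite (set_pmf p)"
  shows "\<bar>measure_pmf.expectation p (\<lambda>js. Yv k js s * Yv k js s) -
          measure_pmf.expectation p (\<lambda>js. Yv k js s) * measure_pmf.expectation p (\<lambda>js. Yv k js s)\<bar> \<le> 1"
proof -
  let ?E = "measure_pmf.expectation p"
  have "0 \<le> ?E (\<lambda>js. Yv k js s * Yv k js s)" by (intro integral_nonneg_AE) (simp add: Yv_01)
  moreover have "?E (\<lambda>js. Yv k js s * Yv k js s) \<le> ?E (\<lambda>js. 1)"
    using assms by (intro exp_mono_support) (auto intro!: mult_le_one simp: Yv_01)
  moreover have "0 \<le> ?E (\<lambda>js. Yv k js s)" by (intro integral_nonneg_AE) (simp add: Yv_01)
  moreover have "?E (\<lambda>js. Yv k js s) \<le> ?E (\<lambda>js. 1)"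
    using assms by (intro exp_mono_support) (auto simp: Yv_01)
  moreover have "?E (\<lambda>js. 1::real) = 1" by (simp add: measure_pmf.prob_space)
  ultimately have "0 \<le> ?E (\<lambda>js. Yv k js s) * ?E (\<lambda>js. Yv k js s)" "?E (\<lambda>js. Yv k js s) * ?E (\<lambda>js. Yv k js s) \<le> 1"
    "0 \<le> ?E (\<lambda>js. Yv k js s * Yv k js s)" "?E (\<lambda>js. Yv k js s * Yv k js s) \<le> 1"
    by (simp_all add: mult_le_one)
  then show ?thesis by linarith
qed

lemma final_ineq:
  fixes x K1 \<epsilon> :: real
  assumes x: "x \<ge> 1" and K1: "K1 \<ge> 0" and \<epsilon>: "\<epsilon> > 0"
  shows "(1 / x)^2 * (x * (1 + K1 * (x + 1) powr \<epsilon> * (4 * sqrt x))) \<le> (1 + 4 * K1 * 2 powr \<epsilon>) * x powr (-1/2 + \<epsilon>)"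
proof -
  have xpos: "x > 0" using x by simp
  have lhs: "(1 / x)^2 * (x * (1 + K1 * (x + 1) powr \<epsilon> * (4 * sqrt x))) = 1 / x + 4 * K1 * (x + 1) powr \<epsilon> * (sqrt x / x)"
    using xpos by (simp add: power2_eq_square field_simps)
  have t1: "1 / x \<le> x powr (-1/2 + \<epsilon>)"
  proof -
    have "1 / x = x powr (-1)" using xpos by (simp add: powr_neg_one)
    also have "\<dots> \<le> x powr (-1/2 + \<epsilon>)" using x \<epsilon> by (intro powr_mono) auto
    finally show ?thesis .
  qed
  have P: "(x + 1) powr \<epsilon> \<le> 2 powr \<epsilon> * x powr \<epsilon>"
  proof -
    have "(x + 1) powr \<epsilon> \<le> (2 * x) powr \<epsilon>" using x \<epsilon> by (intro powr_mono2) auto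
    also have "\<dots> = 2 powr \<epsilon> * x powr \<epsilon>" using xpos by (simp add: powr_mult)
    finally show ?thesis .
  qed
  have sq: "sqrt x / x = x powr (-1/2)"
  proof -
    have "sqrt x = x powr (1/2)" using xpos by (simp add: powr_half_sqrt)
    then have "sqrt x / x = x powr (1/2) / x powr 1" using xpos by simp
    also have "\<dots> = x powr (1/2 - 1)" by (rule powr_diff[symmetric])
    finally show ?thesis by simp
  qed
  have "4 * K1 * (x + 1) powr \<epsilon> * (sqrt x / x) \<le> 4 * K1 * (2 powr \<epsilon> * x powr \<epsilon>) * x powr (-1/2)"
    unfolding sq using P K1 by (intro mult_right_mono mult_left_mono) auto
  also have "\<dots> = 4 * K1 * 2 powr \<epsilon> * x powr (-1/2 + \<epsilon>)"
  proof -
    have "x powr \<epsilon> * x powr (-1/2) = x powr (-1/2 + \<epsilon>)" by (simp add: powr_add[symmetric])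
    then show ?thesis by (simp add: mult.assoc)
  qed
  finally have t2: "4 * K1 * (x + 1) powr \<epsilon> * (sqrt x / x) \<le> 4 * K1 * 2 powr \<epsilon> * x powr (-1/2 + \<epsilon>)" .
  show ?thesis unfolding lhs using t1 t2 by (simp add: algebra_simps)
qed

theorem proposition5p2:
  fixes A :: "(nat \<Rightarrow> real) set" and k q :: nat and \<epsilon> :: real
  assumes "finite A" and "card A = q" and "q \<ge> 1" and "k \<ge> 2"
    and "\<forall>\<alpha>\<in>A. admissible_type k \<alpha>"
    and "\<epsilon> > 0"
  shows "\<exists>C N. \<forall>\<sigma> :: nat \<Rightarrow> nat \<Rightarrow> real. (\<forall>i. \<sigma> i \<in> A) \<longrightarrow>
           (\<forall>n\<ge>N. measure_pmf.variance (steps_pmf k \<sigma> (Suc n)) (R_bar k n)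
                      \<le> C * real n powr (-1/2 + \<epsilon>))"
proof -
  note fA = assms(1) and cA = assms(2) and q = assms(3) and k2 = assms(4) and adA = assms(5) and \<epsilon> = assms(6)
  have Ane: "A \<noteq> {}" using cA q by auto
  define Bs where "Bs = (\<lambda>(\<alpha>, j). \<alpha> j) ` (A \<times> {..<k})"
  have Bfin: "finite Bs" using fA by (simp add: Bs_def)
  have Bne: "Bs \<noteq> {}"
  proof -
    obtain a where "a \<in> A" using Ane by blast
    then have "a 0 \<in> Bs" using k2 unfolding Bs_def by force
    then show ?thesis by blast
  qed
  define \<beta> where "\<beta> = Min Bs"
  have \<beta>le: "\<beta> \<le> \<alpha> j" if "\<alpha> \<in> A" "j < k" for \<alpha> j
  proof -
    have "\<alpha> j \<in> Bs" using that unfolding Bs_def by force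
    then show ?thesis unfolding \<beta>_def using Bfin by simp
  qed
  have "\<beta> \<in> Bs" unfolding \<beta>_def using Bfin Bne by simp
  then obtain \<alpha>0 j0 where aj: "\<alpha>0 \<in> A" "j0 < k" "\<beta> = \<alpha>0 j0" unfolding Bs_def by auto
  have \<beta>pos: "\<beta> > 0" and \<beta>lt: "\<beta> < 1" using adA aj by (auto simp: admissible_type_def)
  obtain K0 where K0: "\<forall>j::nat. j \<ge> 1 \<longrightarrow> 2 ^ card (prime_factors (int j)) \<le> K0 * real j powr (\<epsilon> / 2)" "K0 > 0"
    using two_pow_pf_bound[of "\<epsilon> / 2"] \<epsilon> by auto
  define K1 where "K1 = K0^2 * (real (k - 1) / sqrt \<beta>)"
  have K1nn: "K1 \<ge> 0" unfolding K1_def using \<beta>pos by simp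
  define C where "C = 1 + 4 * K1 * 2 powr \<epsilon>"
  show ?thesis
  proof (intro exI[of _ C] exI[of _ "1::nat"] allI impI)
    fix \<sigma> :: "nat \<Rightarrow> nat \<Rightarrow> real" and n :: nat
    assume \<sigma>A: "\<forall>i. \<sigma> i \<in> A" and n1: "n \<ge> 1"
    have adm: "adm_seq k \<sigma>" using \<sigma>A adA by (simp add: adm_seq_def)
    have mix: "\<forall>l. 0 < l \<and> l < k \<longrightarrow> (\<forall>i. mixcond k l \<beta> (\<sigma> i))"
    proof (intro allI impI)
      fix l i assume l: "0 < l \<and> l < k"
      have "\<sigma> i \<in> A" using \<sigma>A by simp
      then show "mixcond k l \<beta> (\<sigma> i)"
        using adA l \<beta>pos \<beta>lt \<beta>le[of "\<sigma> i" 0] \<beta>le[of "\<sigma> i" l] by (auto simp: mixcond_def)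
    qed
    have k1: "k \<ge> 1" using k2 by simp
    let ?\<Omega> = "steps_pmf k \<sigma> (Suc n)"
    let ?E = "measure_pmf.expectation ?\<Omega>"
    have fin: "finite (set_pmf ?\<Omega>)" by (rule finite_set_steps[OF adm])
    define cv where "cv s s' = ?E (\<lambda>js. Yv k js s * Yv k js s') - ?E (\<lambda>js. Yv k js s) * ?E (\<lambda>js. Yv k js s')" for s s'
    have Req: "R_bar k n = (\<lambda>js. (1 / real n) * (\<Sum>s\<in>{1..n}. Yv k js s))"
      by (simp add: fun_eq_iff R_bar_def Yv_def)
    have V: "measure_pmf.variance ?\<Omega> (R_bar k n) = (1 / real n)^2 * (\<Sum>s\<in>{1..n}. \<Sum>s'\<in>{1..n}. cv s s')"
      unfolding Req cv_def by (rule var_expand[OF fin])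
    define P where "P = (real n + 1) powr \<epsilon>"
    have Pnn: "P \<ge> 0" unfolding P_def by simp
    define bd where "bd s s' = (if s' = s then 1 else K1 * P * (1 / sqrt (real (if s < s' then s' - s else s - s'))))" for s s'
    have cvb: "\<bar>cv s s'\<bar> \<le> bd s s'" if "s \<in> {1..n}" "s' \<in> {1..n}" for s s'
    proof -
      have e2: "2 * (\<epsilon> / 2) = \<epsilon>" by simp
      consider "s' = s" | "s < s'" | "s' < s" by linarith
      then show ?thesis
      proof cases
        case 1
        then show ?thesis unfolding cv_def bd_def using cv_diag[OF fin] by simp
      next
        case 2
        have "\<bar>cv s s'\<bar> \<le> K0^2 * (real n + 1) powr (2 * (\<epsilon> / 2)) * (real (k - 1) / sqrt \<beta> * (1 / sqrt (real (s' - s))))"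
          unfolding cv_def
          by (rule cv_offdiag[OF adm mix k1 2]) (use that K0 \<epsilon> \<beta>pos in auto)
        then show ?thesis using 2 unfolding bd_def K1_def P_def e2 by (simp add: ac_simps)
      next
        case 3
        have sym: "cv s s' = cv s' s" unfolding cv_def by (simp add: mult.commute)
        have "\<bar>cv s' s\<bar> \<le> K0^2 * (real n + 1) powr (2 * (\<epsilon> / 2)) * (real (k - 1) / sqrt \<beta> * (1 / sqrt (real (s - s'))))"
          unfolding cv_def
          by (rule cv_offdiag[OF adm mix k1 3]) (use that K0 \<epsilon> \<beta>pos in auto)
        then show ?thesis using 3 unfolding bd_def K1_def P_def e2 sym by (simp add: ac_simps)
      qed
    qed
    have rowb: "(\<Sum>s'\<in>{1..n}. bd s s') \<le> 1 + K1 * P * (4 * sqrt (real n))" if s: "s \<in> {1..n}" for s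
    proof -
      have "(\<Sum>s'\<in>{1..n}. bd s s') = (\<Sum>s'\<in>{1..n}. (if s' = s then 1 else 0)) +
            K1 * P * (\<Sum>s'\<in>{1..n}. if s' = s then 0 else 1 / sqrt (real (if s < s' then s' - s else s - s')))"
      proof -
        have "bd s s' = (if s' = s then 1 else 0) + K1 * P * (if s' = s then 0 else 1 / sqrt (real (if s < s' then s' - s else s - s')))" for s'
          unfolding bd_def by simp
        then show ?thesis by (simp add: sum.distrib sum_distrib_left)
      qed
      also have "(\<Sum>s'\<in>{1..n}. (if s' = s then 1 else 0 :: real)) = 1" using s by simp
      also have "K1 * P * (\<Sum>s'\<in>{1..n}. if s' = s then 0 else 1 / sqrt (real (if s < s' then s' - s else s - s')))
          \<le> K1 * P * (4 * sqrt (real n))"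
        using row_sum[OF s] K1nn Pnn by (intro mult_left_mono) auto
      finally show ?thesis by simp
    qed
    have "(\<Sum>s\<in>{1..n}. \<Sum>s'\<in>{1..n}. cv s s') \<le> (\<Sum>s\<in>{1..n}. \<Sum>s'\<in>{1..n}. bd s s')"
      using cvb by (intro sum_mono) (meson abs_le_D1)
    also have "\<dots> \<le> (\<Sum>s\<in>{1..n}. 1 + K1 * P * (4 * sqrt (real n)))"
      using rowb by (intro sum_mono) auto
    also have "\<dots> = real n * (1 + K1 * P * (4 * sqrt (real n)))" by simp
    finally have sb: "(\<Sum>s\<in>{1..n}. \<Sum>s'\<in>{1..n}. cv s s') \<le> real n * (1 + K1 * P * (4 * sqrt (real n)))" .
    have "measure_pmf.variance ?\<Omega> (R_bar k n) \<le> (1 / real n)^2 * (real n * (1 + K1 * P * (4 * sqrt (real n))))"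
      unfolding V by (rule mult_left_mono[OF sb]) simp
    also have "\<dots> \<le> C * real n powr (-1/2 + \<epsilon>)"
      unfolding C_def P_def using final_ineq[of "real n" K1 \<epsilon>] n1 K1nn \<epsilon> by simp
    finally show "measure_pmf.variance ?\<Omega> (R_bar k n) \<le> C * real n powr (-1/2 + \<epsilon>)" .
  qed
qed

end
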